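(* For the RHA process and every $n\ge0$, the family $(K_{nj})_{j\ge1}$ is independent of $\mathcal G_{\le n}$, and for every $j\ge1$ and all $l,m\in\{1,\dots,k_n\}$, $$P(K_{nj}=l,\,K_{n,j+1}=m)=\frac1{k_n^2}.$$
   Context: Random hierarchical association (RHA) process. Fix positive integers $(k_n)_{n\ge0}$ (perplexities) with $k_{n-1}\le k_n\le k_{n-1}^2$ for all $n\ge1$. On a probability space $(\Omega,\mathcal J,P)$ let, for each $n\ge1$, $(L_{nj},R_{nj})_{j=1}^{k_n}$ be the lexicographically sorted enumeration of a uniformly random $k_n$-element subset of $\{1,\dots,k_{n-1}\}^2$ (each of the $\binom{k_{n-1}^2}{k_n}$ subsets equally likely), independently over $n$. Let $(C_n)_{n\ge0}$ be independent, independent of all $(L_{nj},R_{nj})$, with $C_n$ uniform on $\{1,\dots,k_n\}$. Define strings $Y^0_j=j$ (length 1) for $1\le j\le k_0$ and $Y^n_j=Y^{n-1}_{L_{nj}}Y^{n-1}_{R_{nj}}$ (concatenation); so $Y^n_1,\dots,Y^n_{k_n}$ are distinct strings of length $2^n$. The RHA process is $\mathcal X=Y^0_{C_0}Y^1_{C_1}Y^2_{C_2}\cdots=X_1X_2X_3\cdots$, $X_{k:l}=X_k\cdots X_l$. For $n\ge0$, $j\ge1$, $X^n_j=X_{j2^n:(j+1)2^n-1}$ (so $X^n_1=Y^n_{C_n}$), and $K_{nj}$ is the unique index with $X^n_j=Y^n_{K_{nj}}$. $\mathcal G_{\le n}=(L_{lj},R_{lj})_{1\le l\le n,\,1\le j\le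 k_l}$ ($\mathcal G_{\le 0}$ is trivial). *)

theory Defs
  imports "HOL-Probability.Probability"
begin

text \<open>A realisation of the random data is given by
  S :: nat \<Rightarrow> (nat \<times> nat) set  (S n = the random k_n-element subset at level n, n \<ge> 1)
  c :: nat \<Rightarrow> nat                  (c n = C_n).\<close>

definition lex_less :: "nat \<times> nat \<Rightarrow> nat \<times> nat \<Rightarrow> bool" where
  "lex_less p q \<longleftrightarrow> fst p < fst q \<or> (fst p = fst q \<and> snd p < snd q)"

text \<open>(L_{nj}, R_{nj}): the j-th element (j \<ge> 1) of the lexicographically sorted
  enumeration of the finite subset A, i.e. the element with exactly j - 1 elements of A
  lexicographically below it.\<close>
definition rha_pair :: "(nat \<times> nat) set \<Rightarrow> nat \<Rightarrow> nat \<times> nat" where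
  "rha_pair A j = (THE p. p \<in> A \<and> card {q \<in> A. lex_less q p} = j - 1)"

definition rha_L :: "(nat \<Rightarrow> (nat \<times> nat) set) \<Rightarrow> nat \<Rightarrow> nat \<Rightarrow> nat" where
  "rha_L S n j = fst (rha_pair (S n) j)"

definition rha_R :: "(nat \<Rightarrow> (nat \<times> nat) set) \<Rightarrow> nat \<Rightarrow> nat \<Rightarrow> nat" where
  "rha_R S n j = snd (rha_pair (S n) j)"

fun rha_Y :: "(nat \<Rightarrow> (nat \<times> nat) set) \<Rightarrow> nat \<Rightarrow> nat \<Rightarrow> nat list" where
  "rha_Y S 0 j = [j]"
| "rha_Y S (Suc n) j = rha_Y S n (rha_L S (Suc n) j) @ rha_Y S n (rha_R S (Suc n) j)"

text \<open>Position i \<ge> 1 of X lies in the block Y^m_{C_m} with 2^m \<le> i < 2^(m+1).\<close>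
definition rha_blk :: "nat \<Rightarrow> nat" where
  "rha_blk i = (LEAST m. i < 2 ^ Suc m)"

text \<open>The symbol X_i (i \<ge> 1) of X = Y^0_{C_0} Y^1_{C_1} Y^2_{C_2} ...\<close>
definition rha_X :: "(nat \<Rightarrow> (nat \<times> nat) set) \<Rightarrow> (nat \<Rightarrow> nat) \<Rightarrow> nat \<Rightarrow> nat" where
  "rha_X S c i = rha_Y S (rha_blk i) (c (rha_blk i)) ! (i - 2 ^ rha_blk i)"

definition rha_Xblock :: "(nat \<Rightarrow> (nat \<times> nat) set) \<Rightarrow> (nat \<Rightarrow> nat) \<Rightarrow> nat \<Rightarrow> nat \<Rightarrow> nat list" where
  "rha_Xblock S c n j = map (rha_X S c) [j * 2 ^ n ..< (j + 1) * 2 ^ n]"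

definition rha_K :: "(nat \<Rightarrow> nat) \<Rightarrow> (nat \<Rightarrow> (nat \<times> nat) set) \<Rightarrow> (nat \<Rightarrow> nat) \<Rightarrow> nat \<Rightarrow> nat \<Rightarrow> nat" where
  "rha_K k S c n j = (THE l. l \<in> {1..k n} \<and> rha_Xblock S c n j = rha_Y S n l)"

definition rha_subsets :: "(nat \<Rightarrow> nat) \<Rightarrow> nat \<Rightarrow> (nat \<times> nat) set set" where
  "rha_subsets k n = {A. A \<subseteq> {1..k (n - 1)} \<times> {1..k (n - 1)} \<and> card A = k n}"

text \<open>Index set of G_{\<le> n} = (L_{lj}, R_{lj}), 1 \<le> l \<le> n, 1 \<le> j \<le> k_l.\<close>
definition rha_Gidx :: "(nat \<Rightarrow> nat) \<Rightarrow> nat \<Rightarrow> (nat \<times> nat) set" where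
  "rha_Gidx k n = {(l, j). 1 \<le> l \<and> l \<le> n \<and> 1 \<le> j \<and> j \<le> k l}"

end

theory Submission
  imports Defs
begin


lemma lex_less_irrefl: "\<not> lex_less p p" by (auto simp: lex_less_def)
lemma lex_less_trans: "lex_less p q \<Longrightarrow> lex_less q r \<Longrightarrow> lex_less p r"
  by (auto simp: lex_less_def)
lemma lex_less_total: "p \<noteq> q \<Longrightarrow> lex_less p q \<or> lex_less q p"
  by (cases p; cases q) (auto simp: lex_less_def)

definition rk :: "(nat \<times> nat) set \<Rightarrow> nat \<times> nat \<Rightarrow> nat" where
  "rk A p = card {q \<in> A. lex_less q p}"

lemma rk_less: assumes "finite A" "p \<in> A" shows "rk A p < card A"
proof -
  have "{q \<in> A. lex_less q p} \<subset> A" using assms lex_less_irrefl by blast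
  then show ?thesis unfolding rk_def using assms by (simp add: psubset_card_mono)
qed

lemma rk_mono: assumes "finite A" "p \<in> A" "q \<in> A" "lex_less p q" shows "rk A p < rk A q"
proof -
  have "{r \<in> A. lex_less r p} \<subseteq> {r \<in> A. lex_less r q}"
    using assms(4) lex_less_trans[of _ p q] by blast
  moreover have "p \<in> {r \<in> A. lex_less r q} - {r \<in> A. lex_less r p}"
    using assms lex_less_irrefl by auto
  ultimately have "{r \<in> A. lex_less r p} \<subset> {r \<in> A. lex_less r q}" by blast
  then show ?thesis unfolding rk_def using assms by (simp add: psubset_card_mono)
qed

lemma rk_inj: assumes "finite A" shows "inj_on (rk A) A"
proof (rule inj_onI)
  fix p q assume "p \<in> A" "q \<in> A" "rk A p = rk A q"
  then show "p = q" using rk_mono[OF assms, of p q] rk_mono[OF assms, of q p] lex_less_total[of p q] by auto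
qed

lemma rk_bij: assumes "finite A" shows "bij_betw (rk A) A {..<card A}"
proof -
  have "rk A ` A \<subseteq> {..<card A}" using rk_less[OF assms] by auto
  moreover have "card (rk A ` A) = card A" using card_image[OF rk_inj[OF assms]] .
  ultimately have "rk A ` A = {..<card A}"
    using card_subset_eq[of "{..<card A}" "rk A ` A"] by simp
  then show ?thesis using rk_inj[OF assms] by (simp add: bij_betw_def)
qed

lemma rha_pair_eq: assumes "finite A" "p \<in> A" "rk A p = j - 1" shows "rha_pair A j = p"
proof -
  have "\<And>q. q \<in> A \<and> card {r \<in> A. lex_less r q} = j - 1 \<Longrightarrow> q = p"
  proof -
    fix q assume "q \<in> A \<and> card {r \<in> A. lex_less r q} = j - 1"
    then have "q \<in> A" "rk A q = rk A p" using assms unfolding rk_def by auto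
    then show "q = p" using rk_inj[OF assms(1)] assms(2) unfolding inj_on_def by blast
  qed
  moreover have "p \<in> A \<and> card {q \<in> A. lex_less q p} = j - 1" using assms unfolding rk_def by simp
  ultimately show ?thesis unfolding rha_pair_def
    by (rule the_equality[rotated])
qed

lemma rha_pair_in: assumes "finite A" "j \<in> {1..card A}" shows "rha_pair A j \<in> A \<and> rk A (rha_pair A j) = j - 1"
proof -
  have "j - 1 \<in> {..<card A}" using assms by auto
  moreover have "rk A ` A = {..<card A}" using rk_bij[OF assms(1)] by (simp add: bij_betw_def)
  ultimately obtain p where "p \<in> A" "rk A p = j - 1" by (metis imageE)
  then show ?thesis using rha_pair_eq[OF assms(1)] by auto
qed

lemma rha_pair_bij: assumes "finite A" shows "bij_betw (rha_pair A) {1..card A} A"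
proof (rule bij_betw_imageI)
  show "inj_on (rha_pair A) {1..card A}"
  proof (rule inj_onI)
    fix i j assume "i \<in> {1..card A}" "j \<in> {1..card A}" "rha_pair A i = rha_pair A j"
    then have "i - 1 = j - 1" using rha_pair_in[OF assms, of i] rha_pair_in[OF assms, of j] by simp
    then show "i = j" using \<open>i \<in> {1..card A}\<close> \<open>j \<in> {1..card A}\<close> by auto
  qed
  show "rha_pair A ` {1..card A} = A"
  proof
    show "rha_pair A ` {1..card A} \<subseteq> A" using rha_pair_in[OF assms] by auto
    show "A \<subseteq> rha_pair A ` {1..card A}"
    proof
      fix p assume p: "p \<in> A"
      have "rha_pair A (Suc (rk A p)) = p" using rha_pair_eq[OF assms p] by simp
      moreover have "Suc (rk A p) \<in> {1..card A}" using rk_less[OF assms p] by auto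
      ultimately show "p \<in> rha_pair A ` {1..card A}" by force
    qed
  qed
qed


definition good :: "(nat \<Rightarrow> nat) \<Rightarrow> (nat \<Rightarrow> (nat \<times> nat) set) \<Rightarrow> bool" where
  "good k S \<longleftrightarrow> (\<forall>i\<ge>1. S i \<in> rha_subsets k i)"

lemma Y_length: "length (rha_Y S q a) = 2^q"
  by (induction q arbitrary: a) auto

lemma subsets_finite: "A \<in> rha_subsets k q \<Longrightarrow> finite A"
  unfolding rha_subsets_def by (auto intro: finite_subset)

lemma pair_range: assumes "A \<in> rha_subsets k q" "a \<in> {1..k q}"
  shows "rha_pair A a \<in> A" "fst (rha_pair A a) \<in> {1..k (q-1)}" "snd (rha_pair A a) \<in> {1..k (q-1)}"
proof -
  have f: "finite A" using subsets_finite[OF assms(1)] .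
  have "card A = k q" using assms(1) unfolding rha_subsets_def by auto
  then show "rha_pair A a \<in> A" using rha_pair_in[OF f, of a] assms(2) by auto
  then show "fst (rha_pair A a) \<in> {1..k (q-1)}" "snd (rha_pair A a) \<in> {1..k (q-1)}"
    using assms(1) unfolding rha_subsets_def by (auto simp: mem_Times_iff)
qed

lemma LR_range: assumes "good k S" "1 \<le> q" "a \<in> {1..k q}"
  shows "rha_L S q a \<in> {1..k (q-1)}" "rha_R S q a \<in> {1..k (q-1)}"
  using pair_range[of "S q" k q a] assms unfolding good_def rha_L_def rha_R_def by auto

lemma pair_inj: assumes "A \<in> rha_subsets k q" "a \<in> {1..k q}" "b \<in> {1..k q}"
  "rha_pair A a = rha_pair A b" shows "a = b"
proof -
  have f: "finite A" using subsets_finite[OF assms(1)] .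
  have "card A = k q" using assms(1) unfolding rha_subsets_def by auto
  then have "inj_on (rha_pair A) {1..k q}" using bij_betw_imp_inj_on[OF rha_pair_bij[OF f]] by simp
  from inj_onD[OF this assms(4) assms(2) assms(3)] show ?thesis .
qed

lemma Y_inj: assumes "good k S" shows "a \<in> {1..k q} \<Longrightarrow> b \<in> {1..k q} \<Longrightarrow> rha_Y S q a = rha_Y S q b \<Longrightarrow> a = b"
proof (induction q arbitrary: a b)
  case 0 then show ?case by simp
next
  case (Suc q)
  have r: "rha_L S (Suc q) a \<in> {1..k q}" "rha_R S (Suc q) a \<in> {1..k q}"
     "rha_L S (Suc q) b \<in> {1..k q}" "rha_R S (Suc q) b \<in> {1..k q}"
    using LR_range[OF assms, of "Suc q"] Suc.prems by auto
  from Suc.prems(3) have "rha_Y S q (rha_L S (Suc q) a) @ rha_Y S q (rha_R S (Suc q) a) =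
      rha_Y S q (rha_L S (Suc q) b) @ rha_Y S q (rha_R S (Suc q) b)" by simp
  then have "rha_Y S q (rha_L S (Suc q) a) = rha_Y S q (rha_L S (Suc q) b) \<and>
      rha_Y S q (rha_R S (Suc q) a) = rha_Y S q (rha_R S (Suc q) b)"
    using append_eq_append_conv[of "rha_Y S q (rha_L S (Suc q) a)" "rha_Y S q (rha_L S (Suc q) b)"] by (simp add: Y_length)
  then have "rha_L S (Suc q) a = rha_L S (Suc q) b" "rha_R S (Suc q) a = rha_R S (Suc q) b"
    using Suc.IH[OF r(1) r(3)] Suc.IH[OF r(2) r(4)] by auto
  then have "rha_pair (S (Suc q)) a = rha_pair (S (Suc q)) b"
    unfolding rha_L_def rha_R_def by (simp add: prod_eq_iff)
  moreover have "S (Suc q) \<in> rha_subsets k (Suc q)" using assms unfolding good_def by auto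
  ultimately show ?case using pair_inj Suc.prems by blast
qed

fun down :: "(nat \<Rightarrow> (nat \<times> nat) set) \<Rightarrow> nat \<Rightarrow> nat \<Rightarrow> nat \<Rightarrow> nat \<Rightarrow> nat" where
  "down S n 0 t a = a"
| "down S n (Suc q) t a = (if Suc q \<le> n then a else
     if t < 2^(q-n) then down S n q t (rha_L S (Suc q) a)
     else down S n q (t - 2^(q-n)) (rha_R S (Suc q) a))"

lemma down_le: "q \<le> n \<Longrightarrow> down S n q t a = a"
  by (cases q) auto

lemma down_Y: assumes "good k S"
  shows "n \<le> q \<Longrightarrow> a \<in> {1..k q} \<Longrightarrow> t < 2^(q-n) \<Longrightarrow>
    down S n q t a \<in> {1..k n} \<and> take (2^n) (drop (t*2^n) (rha_Y S q a)) = rha_Y S n (down S n q t a)"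
proof (induction q arbitrary: t a)
  case 0 then show ?case by simp
next
  case (Suc q)
  show ?case
  proof (cases "Suc q \<le> n")
    case True
    then have "n = Suc q" "t = 0" using Suc.prems by auto
    then show ?thesis using Suc.prems by (simp add: Y_length)
  next
    case False
    then have nq: "n \<le> q" by simp
    define e where "e = q - n"
    have q: "q = e + n" using nq e_def by simp
    have pq: "(2::nat)^q = 2^e * 2^n" by (simp add: q power_add)
    have pS: "(2::nat)^(Suc q - n) = 2 * 2^e" using nq by (simp add: e_def Suc_diff_le)
    have r: "rha_L S (Suc q) a \<in> {1..k q}" "rha_R S (Suc q) a \<in> {1..k q}"
      using LR_range[OF assms, of "Suc q"] Suc.prems by auto
    let ?xs = "rha_Y S q (rha_L S (Suc q) a)" and ?ys = "rha_Y S q (rha_R S (Suc q) a)"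
    have Ysuc: "rha_Y S (Suc q) a = ?xs @ ?ys" by simp
    have lx: "length ?xs = 2^e * 2^n" "length ?ys = 2^e * 2^n" using pq by (auto simp: Y_length)
    show ?thesis
    proof (cases "t < 2^e")
      case True
      have d: "down S n (Suc q) t a = down S n q t (rha_L S (Suc q) a)" using False True e_def by simp
      have IH: "down S n q t (rha_L S (Suc q) a) \<in> {1..k n} \<and>
         take (2^n) (drop (t*2^n) ?xs) = rha_Y S n (down S n q t (rha_L S (Suc q) a))"
        using Suc.IH[OF nq r(1)] True e_def by simp
      have "Suc t * 2^n \<le> 2^e * 2^n" using True by (intro mult_le_mono1) simp
      then have le: "t * 2^n + 2^n \<le> length ?xs" using lx by simp
      have "take (2^n) (drop (t*2^n) (?xs @ ?ys)) = take (2^n) (drop (t*2^n) ?xs)"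
        using le by (simp add: drop_append take_append)
      then show ?thesis using d IH Ysuc by simp
    next
      case f2: False
      have d: "down S n (Suc q) t a = down S n q (t - 2^e) (rha_R S (Suc q) a)" using False f2 e_def by simp
      have tl: "t - 2^e < 2^e" using Suc.prems(3) pS by simp
      have IH: "down S n q (t - 2^e) (rha_R S (Suc q) a) \<in> {1..k n} \<and>
         take (2^n) (drop ((t - 2^e)*2^n) ?ys) = rha_Y S n (down S n q (t - 2^e) (rha_R S (Suc q) a))"
        using Suc.IH[OF nq r(2)] tl e_def by simp
      have ge: "2^e * 2^n \<le> t * 2^n" using f2 by simp
      have eq: "(t - 2^e) * 2^n = t * 2^n - 2^e * 2^n" by (simp add: diff_mult_distrib)
      have "drop (t*2^n) (?xs @ ?ys) = drop ((t - 2^e)*2^n) ?ys"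
        using ge lx eq by (simp add: drop_append)
      then show ?thesis using d IH Ysuc by simp
    qed
  qed
qed

lemma blk_eq: assumes "2^m \<le> i" "i < (2::nat)^(Suc m)" shows "rha_blk i = m"
  unfolding rha_blk_def
proof (rule Least_equality)
  show "i < 2 ^ Suc m" by fact
  fix y assume y: "i < 2 ^ Suc y"
  show "m \<le> y"
  proof (rule ccontr)
    assume "\<not> m \<le> y"
    then have "Suc y \<le> m" by simp
    then have "(2::nat)^Suc y \<le> 2^m" by (rule power_increasing) simp
    then show False using y assms(1) by simp
  qed
qed

lemma blk_props: assumes "1 \<le> i" shows "2^(rha_blk i) \<le> i" "i < (2::nat)^(Suc (rha_blk i))"
proof -
  have "i < (2::nat)^Suc i" by (induction i) auto
  then have ex: "\<exists>m. i < (2::nat)^Suc m" by blast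
  show "i < (2::nat)^(Suc (rha_blk i))" unfolding rha_blk_def by (rule LeastI_ex[OF ex])
  show "2^(rha_blk i) \<le> i"
  proof (cases "rha_blk i")
    case 0 then show ?thesis using assms by simp
  next
    case (Suc m)
    then have "m < (LEAST m. i < (2::nat) ^ Suc m)" unfolding rha_blk_def by simp
    then have "\<not> i < 2 ^ Suc m" by (rule not_less_Least)
    then show ?thesis using Suc by simp
  qed
qed


lemma blk_basic: fixes n j :: nat assumes "1 \<le> j" defines "mm \<equiv> rha_blk (j*2^n)"
  shows "n \<le> mm" "2^(mm-n) \<le> j" "j < 2*2^(mm-n)"
proof -
  have "1 \<le> j*2^n" using assms(1) by simp
  note b = blk_props[OF this, folded mm_def]
  have "(2::nat)^n \<le> j*2^n" using assms(1) by simp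
  then have "(2::nat)^n < 2^Suc mm" using b(2) by linarith
  then have "n < Suc mm" using power_strict_increasing_iff[of "2::nat" n "Suc mm"] by simp
  then show nm: "n \<le> mm" by simp
  define e where "e = mm - n"
  have pm: "(2::nat)^mm = 2^e * 2^n" using nm by (simp add: e_def power_add[symmetric])
  have "2^e * 2^n \<le> j * (2::nat)^n" using b(1) pm by simp
  then show "2^(mm-n) \<le> j" unfolding e_def by simp
  have "j * 2^n < (2 * 2^e) * (2::nat)^n" using b(2) pm by simp
  then show "j < 2*2^(mm-n)" unfolding e_def by simp
qed

lemma Xblock_eq: fixes n j :: nat assumes "1 \<le> j" defines "mm \<equiv> rha_blk (j*2^n)"
  shows "rha_Xblock S c n j = take (2^n) (drop ((j - 2^(mm-n))*2^n) (rha_Y S mm (c mm)))"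
proof -
  note bb = blk_basic[OF assms(1), of n, folded mm_def]
  define e where "e = mm - n"
  define t where "t = j - 2^e"
  have pm: "(2::nat)^mm = 2^e * 2^n" using bb(1) by (simp add: e_def power_add[symmetric])
  have pS: "(2::nat)^Suc mm = 2 * 2^e * 2^n" using pm by simp
  have t1: "Suc t \<le> 2^e" using bb(2,3) unfolding t_def e_def by simp
  have "Suc t * 2^n \<le> 2^e * (2::nat)^n" using t1 by (rule mult_le_mono1)
  then have tp: "t*2^n + 2^n \<le> 2^mm" using pm by simp
  have tj: "t * 2^n = j*2^n - 2^mm" using pm unfolding t_def by (simp add: diff_mult_distrib)
  have jm: "2^mm \<le> j * (2::nat)^n" using bb(2) pm unfolding e_def by simp
  have j1: "(j+1) * (2::nat)^n \<le> 2 * 2^e * 2^n" using bb(3) unfolding e_def by (intro mult_le_mono1) simp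
  show ?thesis
  proof (rule nth_equalityI)
    show "length (rha_Xblock S c n j) = length (take (2^n) (drop ((j - 2^(mm-n))*2^n) (rha_Y S mm (c mm))))"
      using tp unfolding rha_Xblock_def t_def e_def by (simp add: Y_length)
  next
    fix i assume "i < length (rha_Xblock S c n j)"
    then have i: "i < 2^n" unfolding rha_Xblock_def by simp
    have blk: "rha_blk (j*2^n + i) = mm"
    proof (rule blk_eq)
      show "2^mm \<le> j*2^n + i" using jm by simp
      show "j*2^n + i < 2^Suc mm" using i j1 pS by simp
    qed
    have "rha_Xblock S c n j ! i = rha_X S c (j*2^n + i)"
      unfolding rha_Xblock_def using i by simp
    also have "\<dots> = rha_Y S mm (c mm) ! (t*2^n + i)"
      unfolding rha_X_def blk using tj jm by (simp add: add.commute)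
    also have "\<dots> = take (2^n) (drop ((j - 2^(mm-n))*2^n) (rha_Y S mm (c mm))) ! i"
      using i tp unfolding t_def e_def by (simp add: Y_length)
    finally show "rha_Xblock S c n j ! i = take (2^n) (drop ((j - 2^(mm-n))*2^n) (rha_Y S mm (c mm))) ! i" .
  qed
qed

lemma K_eq: assumes "good k S" "\<And>m. c m \<in> {1..k m}" "1 \<le> j"
  shows "rha_K k S c n j = down S n (rha_blk (j*2^n)) (j - 2^(rha_blk (j*2^n)-n)) (c (rha_blk (j*2^n)))"
proof -
  define mm where "mm = rha_blk (j*2^n)"
  note bb = blk_basic[OF assms(3), of n, folded mm_def]
  have tl: "j - 2^(mm-n) < 2^(mm-n)" using bb by simp
  note d = down_Y[OF assms(1) bb(1) assms(2)[of mm] tl]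
  have X: "rha_Xblock S c n j = rha_Y S n (down S n mm (j - 2^(mm-n)) (c mm))"
    using Xblock_eq[OF assms(3), of S c n] d unfolding mm_def by simp
  have "rha_K k S c n j = down S n mm (j - 2^(mm-n)) (c mm)"
    unfolding rha_K_def
  proof (rule the_equality)
    show "down S n mm (j - 2^(mm-n)) (c mm) \<in> {1..k n} \<and> rha_Xblock S c n j = rha_Y S n (down S n mm (j - 2^(mm-n)) (c mm))"
      using d X by simp
    fix l assume "l \<in> {1..k n} \<and> rha_Xblock S c n j = rha_Y S n l"
    then show "l = down S n mm (j - 2^(mm-n)) (c mm)" using Y_inj[OF assms(1)] d X by metis
  qed
  then show ?thesis unfolding mm_def .
qed

lemma blk_next_same: assumes "1 \<le> j" "j + 1 < 2*2^(rha_blk (j*2^n) - n)"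
  shows "rha_blk ((j+1)*2^n) = rha_blk (j*2^n)"
proof -
  define mm where "mm = rha_blk (j*2^n)"
  note bb = blk_basic[OF assms(1), of n, folded mm_def]
  have pm: "(2::nat)^mm = 2^(mm-n) * 2^n" using bb(1) by (simp add: power_add[symmetric])
  show ?thesis unfolding mm_def[symmetric]
  proof (rule blk_eq)
    have "2^(mm-n) * 2^n \<le> (j+1) * (2::nat)^n" using bb(2) by (intro mult_le_mono1) simp
    then show "2^mm \<le> (j+1)*2^n" using pm by simp
    have "(j+1) * 2^n < (2*2^(mm-n)) * (2::nat)^n" using mult_less_mono1[OF assms(2), of "2^n"] unfolding mm_def by simp
    then show "(j+1)*2^n < 2^Suc mm" using pm by simp
  qed
qed

lemma blk_next_new: assumes "1 \<le> j" "j + 1 = 2*2^(rha_blk (j*2^n) - n)"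
  shows "rha_blk ((j+1)*2^n) = Suc (rha_blk (j*2^n))" "j + 1 - 2^(Suc (rha_blk (j*2^n)) - n) = 0"
proof -
  define mm where "mm = rha_blk (j*2^n)"
  note bb = blk_basic[OF assms(1), of n, folded mm_def]
  have pm: "(2::nat)^Suc mm = (2*2^(mm-n)) * 2^n" using bb(1) by (simp add: power_add[symmetric])
  have ps: "(2::nat)^(Suc mm - n) = 2*2^(mm-n)" using bb(1) by (simp add: Suc_diff_le)
  have eq: "(j+1)*2^n = 2^Suc mm" using assms(2) pm unfolding mm_def by simp
  show "rha_blk ((j+1)*2^n) = Suc (rha_blk (j*2^n))" unfolding mm_def[symmetric] eq
    by (rule blk_eq) simp_all
  show "j + 1 - 2^(Suc (rha_blk (j*2^n)) - n) = 0" using assms(2) ps unfolding mm_def by simp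
qed


lemma cnt_subsets: assumes "finite U" "P \<subseteq> U" "card P \<le> kk"
  shows "card {T. T \<subseteq> U \<and> card T = kk \<and> P \<subseteq> T} = (card U - card P) choose (kk - card P)"
proof -
  have fP: "finite P" using assms(1,2) finite_subset by blast
  have "bij_betw (\<lambda>T. T - P) {T. T \<subseteq> U \<and> card T = kk \<and> P \<subseteq> T} {T'. T' \<subseteq> U - P \<and> card T' = kk - card P}"
  proof (rule bij_betw_byWitness[where f'="\<lambda>T'. T' \<union> P"])
    show "\<forall>a\<in>{T. T \<subseteq> U \<and> card T = kk \<and> P \<subseteq> T}. a - P \<union> P = a" by auto
    show "\<forall>a'\<in>{T'. T' \<subseteq> U - P \<and> card T' = kk - card P}. a' \<union> P - P = a'" by auto
    show "(\<lambda>T. T - P) ` {T. T \<subseteq> U \<and> card T = kk \<and> P \<subseteq> T} \<subseteq> {T'. T' \<subseteq> U - P \<and> card T' = kk - card P}"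
    proof
      fix X assume "X \<in> (\<lambda>T. T - P) ` {T. T \<subseteq> U \<and> card T = kk \<and> P \<subseteq> T}"
      then obtain T where T: "T \<subseteq> U" "card T = kk" "P \<subseteq> T" "X = T - P" by auto
      have "finite T" using T(1) assms(1) finite_subset by blast
      then have "card (T - P) = card T - card P" using T(3) by (simp add: card_Diff_subset fP)
      then show "X \<in> {T'. T' \<subseteq> U - P \<and> card T' = kk - card P}" using T by auto
    qed
    show "(\<lambda>T'. T' \<union> P) ` {T'. T' \<subseteq> U - P \<and> card T' = kk - card P} \<subseteq> {T. T \<subseteq> U \<and> card T = kk \<and> P \<subseteq> T}"
    proof
      fix X assume "X \<in> (\<lambda>T'. T' \<union> P) ` {T'. T' \<subseteq> U - P \<and> card T' = kk - card P}"
      then obtain T where T: "T \<subseteq> U - P" "card T = kk - card P" "X = T \<union> P" by auto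
      have "finite T" using T(1) assms(1) finite_subset by blast
      then have "card (T \<union> P) = card T + card P" using T(1) fP by (subst card_Un_disjoint) auto
      then show "X \<in> {T. T \<subseteq> U \<and> card T = kk \<and> P \<subseteq> T}" using T assms by auto
    qed
  qed
  then have "card {T. T \<subseteq> U \<and> card T = kk \<and> P \<subseteq> T} = card {T'. T' \<subseteq> U - P \<and> card T' = kk - card P}"
    by (rule bij_betw_same_card)
  also have "\<dots> = card (U - P) choose (kk - card P)" using assms(1) by (simp add: n_subsets)
  also have "card (U - P) = card U - card P" using assms(2) fP by (simp add: card_Diff_subset)
  finally show ?thesis .
qed

lemma bij_card_filter: assumes "bij_betw f A B" shows "card {a\<in>A. Q (f a)} = card {b\<in>B. Q b}"
proof -
  have "bij_betw f {a\<in>A. Q (f a)} {b\<in>B. Q b}"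
    using assms unfolding bij_betw_def inj_on_def by auto
  then show ?thesis by (rule bij_betw_same_card)
qed

lemma choose_id1: assumes "1 \<le> kk" "1 \<le> N" shows "((N - 1) choose (kk - 1)) * N = (N choose kk) * kk"
proof -
  obtain M K where "N = Suc M" "kk = Suc K" using assms by (metis Suc_le_D One_nat_def)
  then show ?thesis using Suc_times_binomial[of K M] by (simp add: mult.commute)
qed

lemma choose_id2: assumes "2 \<le> kk" "2 \<le> N" shows "((N - 2) choose (kk - 2)) * N * (N - 1) = (N choose kk) * kk * (kk - 1)"
proof -
  obtain M K where MK: "N = Suc (Suc M)" "kk = Suc (Suc K)" using assms
    by (metis add_2_eq_Suc le_Suc_ex)
  have a: "Suc K * (Suc M choose Suc K) = Suc M * (M choose K)" by (rule Suc_times_binomial)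
  have b: "Suc (Suc K) * (Suc (Suc M) choose Suc (Suc K)) = Suc (Suc M) * (Suc M choose Suc K)" by (rule Suc_times_binomial)
  have "(M choose K) * Suc (Suc M) * Suc M = Suc (Suc M) * (Suc M * (M choose K))" by (simp only: mult.commute mult.left_commute)
  also have "\<dots> = Suc (Suc M) * (Suc K * (Suc M choose Suc K))" by (simp only: a)
  also have "\<dots> = Suc K * (Suc (Suc M) * (Suc M choose Suc K))" by (simp only: mult.left_commute)
  also have "\<dots> = Suc K * (Suc (Suc K) * (Suc (Suc M) choose Suc (Suc K)))" by (simp only: b)
  finally have R: "(M choose K) * Suc (Suc M) * Suc M = Suc K * (Suc (Suc K) * (Suc (Suc M) choose Suc (Suc K)))" .
  have e: "N - 2 = M" "kk - 2 = K" "N - 1 = Suc M" "kk - 1 = Suc K" using MK by simp_all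
  show ?thesis unfolding e unfolding MK using R by (simp only: mult.commute mult.left_commute)
qed

lemma pair_count_one: assumes "finite T" "card T = kk"
  shows "card {a\<in>{1..kk}. rha_pair T a = p} = (if p \<in> T then 1 else 0)"
proof -
  have "card {a\<in>{1..kk}. rha_pair T a = p} = card {b\<in>T. b = p}"
    using bij_card_filter[OF rha_pair_bij[OF assms(1)], of "\<lambda>b. b = p"] assms(2) by simp
  also have "\<dots> = (if p \<in> T then 1 else 0)"
  proof (cases "p \<in> T")
    case True then have "{b\<in>T. b = p} = {p}" by auto
    then show ?thesis using True by simp
  next
    case False then have "{b\<in>T. b = p} = {}" by auto
    then show ?thesis using False by simp
  qed
  finally show ?thesis .
qed

lemma count_split:
  fixes N0 kk :: nat and x y :: nat
  defines "Tset \<equiv> {T. T \<subseteq> {1..N0} \<times> {1..N0} \<and> card T = kk}"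
  assumes "1 \<le> kk" "x \<in> {1..N0}" "y \<in> {1..N0}"
  shows "card (SIGMA T:Tset. {a\<in>{1..kk}. rha_pair T a = (x,y)}) * (N0*N0) = ((N0*N0) choose kk) * kk"
proof -
  let ?U = "{1..N0} \<times> {1..N0}"
  have fT: "finite Tset" unfolding Tset_def by simp
  have "card (SIGMA T:Tset. {a\<in>{1..kk}. rha_pair T a = (x,y)}) = (\<Sum>T\<in>Tset. card {a\<in>{1..kk}. rha_pair T a = (x,y)})"
    using fT by (simp del: card_SigmaI add: card_SigmaI)
  also have "\<dots> = (\<Sum>T\<in>Tset. (if (x,y) \<in> T then 1 else 0))"
  proof (rule sum.cong[OF refl])
    fix T assume "T \<in> Tset"
    then have "finite T" "card T = kk" unfolding Tset_def by (auto intro: finite_subset)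
    then show "card {a\<in>{1..kk}. rha_pair T a = (x,y)} = (if (x,y) \<in> T then 1 else 0)" by (rule pair_count_one)
  qed
  also have "\<dots> = card {T\<in>Tset. (x,y) \<in> T}" using fT by (simp add: sum.If_cases, intro arg_cong[where f=card]) auto
  also have "{T\<in>Tset. (x,y) \<in> T} = {T. T \<subseteq> ?U \<and> card T = kk \<and> {(x,y)} \<subseteq> T}" unfolding Tset_def by auto
  also have "card \<dots> = (N0*N0 - 1) choose (kk - 1)"
    using cnt_subsets[of ?U "{(x,y)}" kk] assms by simp
  finally have c: "card (SIGMA T:Tset. {a\<in>{1..kk}. rha_pair T a = (x,y)}) = (N0*N0 - 1) choose (kk - 1)" .
  have "1 \<le> N0*N0" using assms(3) by simp
  then show ?thesis unfolding c using choose_id1[OF assms(2)] by simp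
qed

lemma card_filter_sum: "finite A \<Longrightarrow> card {z\<in>A. P z} = (\<Sum>z\<in>A. if P z then 1 else 0)"
  by (simp add: sum.If_cases, intro arg_cong[where f=card]) auto

lemma count_two:
  fixes N0 kk :: nat
  assumes "1 \<le> kk" "p \<in> {1..N0} \<times> {1..N0}" "p' \<in> {1..N0} \<times> {1..N0}" "p \<noteq> p'"
  shows "card {T. T \<subseteq> {1..N0} \<times> {1..N0} \<and> card T = kk \<and> {p, p'} \<subseteq> T} * (N0*N0) * (N0*N0 - 1)
     = ((N0*N0) choose kk) * kk * (kk - 1)"
proof (cases "kk = 1")
  case True
  have "{T. T \<subseteq> {1..N0} \<times> {1..N0} \<and> card T = kk \<and> {p, p'} \<subseteq> T} = {}"
  proof (rule ccontr)
    assume "\<not> ?thesis"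
    then obtain T where T: "T \<subseteq> {1..N0} \<times> {1..N0}" "card T = 1" "{p,p'} \<subseteq> T" using True by auto
    have "finite T" using T(1) finite_subset by blast
    then have "card {p,p'} \<le> card T" using T(3) card_mono by blast
    then show False using T(2) assms(4) by simp
  qed
  then show ?thesis using True by simp
next
  case False
  then have k2: "2 \<le> kk" using assms(1) by simp
  have c: "card {T. T \<subseteq> {1..N0} \<times> {1..N0} \<and> card T = kk \<and> {p, p'} \<subseteq> T} = (N0*N0 - 2) choose (kk - 2)"
    using cnt_subsets[of "{1..N0} \<times> {1..N0}" "{p,p'}" kk] assms k2 by (simp add: numeral_2_eq_2)
  show ?thesis
  proof (cases "2 \<le> N0*N0")
    case True then show ?thesis unfolding c using choose_id2[OF k2 True] by simp
  next
    case f: False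
    have "N0*N0 \<le> 1" using f by simp
    then have "N0*N0 - 1 = 0" by simp
    moreover have "(N0*N0) choose kk = 0" using \<open>N0*N0 \<le> 1\<close> k2 by simp
    ultimately show ?thesis by simp
  qed
qed

lemma count_mixed:
  fixes N0 kk :: nat and x y :: nat
  defines "Tset \<equiv> {T. T \<subseteq> {1..N0} \<times> {1..N0} \<and> card T = kk}"
  assumes k1: "1 \<le> kk" and xy: "x \<in> {1..N0}" "y \<in> {1..N0}"
  shows "card (SIGMA T:Tset. {(a,b)\<in>{1..kk}\<times>{1..kk}. snd (rha_pair T a) = x \<and> fst (rha_pair T b) = y}) * (N0*N0)
     = ((N0*N0) choose kk) * kk^2"
proof -
  let ?G = "{1..N0}" let ?U = "{1..N0} \<times> {1..N0}"
  have fT: "finite Tset" unfolding Tset_def by simp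
  define f where "f z = card {T\<in>Tset. (fst z, x) \<in> T \<and> (y, snd z) \<in> T}" for z :: "nat \<times> nat"
  have inner: "card {(a,b)\<in>{1..kk}\<times>{1..kk}. snd (rha_pair T a) = x \<and> fst (rha_pair T b) = y}
      = (\<Sum>z\<in>?U. if (fst z, x) \<in> T \<and> (y, snd z) \<in> T then 1 else 0)" if T: "T \<in> Tset" for T
  proof -
    have TU: "T \<subseteq> ?U" and cT: "card T = kk" using T unfolding Tset_def by auto
    have fin: "finite T" using TU finite_subset by blast
    have "{(a,b)\<in>{1..kk}\<times>{1..kk}. snd (rha_pair T a) = x \<and> fst (rha_pair T b) = y}
        = {a\<in>{1..kk}. snd (rha_pair T a) = x} \<times> {b\<in>{1..kk}. fst (rha_pair T b) = y}" by auto
    then have "card {(a,b)\<in>{1..kk}\<times>{1..kk}. snd (rha_pair T a) = x \<and> fst (rha_pair T b) = y}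
        = card {a\<in>{1..kk}. snd (rha_pair T a) = x} * card {b\<in>{1..kk}. fst (rha_pair T b) = y}"
      by (simp add: card_cartesian_product)
    also have "card {a\<in>{1..kk}. snd (rha_pair T a) = x} = card {p\<in>T. snd p = x}"
      using bij_card_filter[OF rha_pair_bij[OF fin], of "\<lambda>p. snd p = x"] cT by simp
    also have "card {b\<in>{1..kk}. fst (rha_pair T b) = y} = card {p\<in>T. fst p = y}"
      using bij_card_filter[OF rha_pair_bij[OF fin], of "\<lambda>p. fst p = y"] cT by simp
    also have "card {p\<in>T. snd p = x} = card {u\<in>?G. (u,x) \<in> T}"
    proof (rule bij_betw_same_card[symmetric], rule bij_betw_byWitness[where f'=fst])
      show "(\<lambda>u. (u, x)) ` {u \<in> ?G. (u, x) \<in> T} \<subseteq> {p \<in> T. snd p = x}" by auto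
      show "fst ` {p \<in> T. snd p = x} \<subseteq> {u \<in> ?G. (u, x) \<in> T}" using TU by force
    qed auto
    also have "card {p\<in>T. fst p = y} = card {v\<in>?G. (y,v) \<in> T}"
    proof (rule bij_betw_same_card[symmetric], rule bij_betw_byWitness[where f'=snd])
      show "(\<lambda>v. (y, v)) ` {v \<in> ?G. (y, v) \<in> T} \<subseteq> {p \<in> T. fst p = y}" by auto
      show "snd ` {p \<in> T. fst p = y} \<subseteq> {v \<in> ?G. (y, v) \<in> T}" using TU by force
    qed auto
    also have "card {u\<in>?G. (u,x) \<in> T} * card {v\<in>?G. (y,v) \<in> T} = card ({u\<in>?G. (u,x) \<in> T} \<times> {v\<in>?G. (y,v) \<in> T})"
      by (simp add: card_cartesian_product)
    also have "{u\<in>?G. (u,x) \<in> T} \<times> {v\<in>?G. (y,v) \<in> T} = {z\<in>?U. (fst z, x) \<in> T \<and> (y, snd z) \<in> T}" by auto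
    also have "card \<dots> = (\<Sum>z\<in>?U. if (fst z, x) \<in> T \<and> (y, snd z) \<in> T then 1 else 0)"
      by (rule card_filter_sum) simp
    finally show ?thesis .
  qed
  have "card (SIGMA T:Tset. {(a,b)\<in>{1..kk}\<times>{1..kk}. snd (rha_pair T a) = x \<and> fst (rha_pair T b) = y})
     = (\<Sum>T\<in>Tset. card {(a,b)\<in>{1..kk}\<times>{1..kk}. snd (rha_pair T a) = x \<and> fst (rha_pair T b) = y})"
  proof (rule card_SigmaI[OF fT], rule ballI)
    fix T show "finite {(a,b)\<in>{1..kk}\<times>{1..kk}. snd (rha_pair T a) = x \<and> fst (rha_pair T b) = y}"
      by (rule finite_subset[of _ "{1..kk}\<times>{1..kk}"]) auto
  qed
  also have "\<dots> = (\<Sum>T\<in>Tset. \<Sum>z\<in>?U. if (fst z, x) \<in> T \<and> (y, snd z) \<in> T then 1 else 0)"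
    using inner by (rule sum.cong[OF refl])
  also have "\<dots> = (\<Sum>z\<in>?U. \<Sum>T\<in>Tset. if (fst z, x) \<in> T \<and> (y, snd z) \<in> T then 1 else 0)"
    by (rule sum.swap)
  also have "\<dots> = (\<Sum>z\<in>?U. f z)"
    unfolding f_def using fT by (intro sum.cong[OF refl]) (simp add: card_filter_sum)
  also have "\<dots> = f (y,x) + (\<Sum>z\<in>?U - {(y,x)}. f z)"
    using xy by (subst sum.remove[of _ "(y,x)"]) auto
  finally have R: "card (SIGMA T:Tset. {(a,b)\<in>{1..kk}\<times>{1..kk}. snd (rha_pair T a) = x \<and> fst (rha_pair T b) = y})
     = f (y,x) + (\<Sum>z\<in>?U - {(y,x)}. f z)" .
  have f1: "f (y,x) = card {T. T \<subseteq> ?U \<and> card T = kk \<and> {(y,x)} \<subseteq> T}"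
    unfolding f_def Tset_def by (intro arg_cong[where f=card]) auto
  have f1': "f (y,x) * (N0*N0) = ((N0*N0) choose kk) * kk"
  proof -
    have "f (y,x) = (N0*N0 - 1) choose (kk - 1)" using f1 cnt_subsets[of ?U "{(y,x)}" kk] xy k1 by simp
    moreover have "1 \<le> N0*N0" using xy by simp
    ultimately show ?thesis using choose_id1[OF k1] by simp
  qed
  define c2 where "c2 = card {T. T \<subseteq> ?U \<and> card T = kk \<and> {(y,y), (x,x)} \<subseteq> T}"
  have f2: "f z = card {T. T \<subseteq> ?U \<and> card T = kk \<and> {(fst z, x), (y, snd z)} \<subseteq> T}" for z
    unfolding f_def Tset_def by (intro arg_cong[where f=card]) auto
  have f2': "f z * (N0*N0) * (N0*N0 - 1) = ((N0*N0) choose kk) * kk * (kk - 1)" if z: "z \<in> ?U - {(y,x)}" for z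
  proof -
    have "(fst z, x) \<noteq> (y, snd z)" using z by (cases z) auto
    then show ?thesis unfolding f2 using count_two[OF k1, of "(fst z, x)" N0 "(y, snd z)"] z xy
      by (cases z) auto
  qed
  have "card (?U - {(y,x)}) = N0*N0 - 1" using xy by (simp add: card_cartesian_product)
  have "(\<Sum>z\<in>?U - {(y,x)}. f z) * (N0*N0) = (\<Sum>z\<in>?U - {(y,x)}. f z * (N0*N0))"
    by (simp add: sum_distrib_right)
  then have "(\<Sum>z\<in>?U - {(y,x)}. f z) * (N0*N0) * (N0*N0 - 1) = (\<Sum>z\<in>?U - {(y,x)}. f z * (N0*N0) * (N0*N0 - 1))"
    by (simp add: sum_distrib_right)
  also have "\<dots> = (\<Sum>z\<in>?U - {(y,x)}. ((N0*N0) choose kk) * kk * (kk - 1))"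
    using f2' by (rule sum.cong[OF refl])
  also have "\<dots> = (N0*N0 - 1) * (((N0*N0) choose kk) * kk * (kk - 1))"
    using \<open>card (?U - {(y,x)}) = N0*N0 - 1\<close> by simp
  finally have S2: "(\<Sum>z\<in>?U - {(y,x)}. f z) * (N0*N0) * (N0*N0 - 1) = (N0*N0 - 1) * (((N0*N0) choose kk) * kk * (kk - 1))" .
  show ?thesis
  proof (cases "N0*N0 = 1")
    case True
    then have "N0 = 1" by (simp add: mult_eq_1_iff)
    then have "?U - {(y,x)} = {}" using xy by auto
    then have s0: "(\<Sum>z\<in>?U - {(y,x)}. f z) = 0" by (simp only: sum.empty)
    show ?thesis
    proof (cases "kk = 1")
      case True
      have "f (y,x) = 1" using f1' \<open>N0 = 1\<close> True by simp
      then show ?thesis unfolding R s0 using \<open>N0 = 1\<close> True by simp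
    next
      case False
      then have "(N0*N0) choose kk = 0" using k1 \<open>N0*N0 = 1\<close> by (intro binomial_eq_0) simp
      then show ?thesis unfolding R s0 using f1' \<open>N0*N0 = 1\<close> by simp
    qed
  next
    case False
    have "1 \<le> N0" using xy by simp
    have "N0 \<noteq> 1" using False by auto
    then have "2 \<le> N0" using \<open>1 \<le> N0\<close> by simp
    then have "2 * 2 \<le> N0 * N0" using mult_le_mono by blast
    then have pos: "N0*N0 - 1 > 0" by simp
    from S2 have S2': "(\<Sum>z\<in>?U - {(y,x)}. f z) * (N0*N0) = ((N0*N0) choose kk) * kk * (kk - 1)"
      using pos by (simp add: mult.commute mult.left_commute)
    have "kk + kk * (kk - 1) = kk^2" using k1 by (cases kk) (simp_all add: power2_eq_square)
    then have "((N0*N0) choose kk) * kk + ((N0*N0) choose kk) * kk * (kk - 1) = ((N0*N0) choose kk) * kk^2"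
      by (metis add_mult_distrib2 mult.assoc)
    then show ?thesis unfolding R using f1' S2' by (simp add: add_mult_distrib)
  qed
qed


locale rha = prob_space M for M :: "'a measure" +
  fixes k :: "nat \<Rightarrow> nat" and S :: "nat \<Rightarrow> 'a \<Rightarrow> (nat \<times> nat) set" and C :: "nat \<Rightarrow> 'a \<Rightarrow> nat"
  assumes kpos: "\<And>i. k i \<ge> 1"
    and kmono: "\<And>i. i \<ge> 1 \<Longrightarrow> k (i - 1) \<le> k i \<and> k i \<le> (k (i - 1))\<^sup>2"
    and S_range: "\<And>i \<omega>. i \<ge> 1 \<Longrightarrow> \<omega> \<in> space M \<Longrightarrow> S i \<omega> \<in> rha_subsets k i"
    and S_unif: "\<And>i A. i \<ge> 1 \<Longrightarrow> A \<in> rha_subsets k i \<Longrightarrow>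
        measure M {\<omega> \<in> space M. S i \<omega> = A} = 1 / real ((k (i - 1))\<^sup>2 choose k i)"
    and C_range: "\<And>i \<omega>. \<omega> \<in> space M \<Longrightarrow> C i \<omega> \<in> {1..k i}"
    and C_unif: "\<And>i l. l \<in> {1..k i} \<Longrightarrow> measure M {\<omega> \<in> space M. C i \<omega> = l} = 1 / real (k i)"
    and indep: "indep_vars (\<lambda>_. count_space UNIV)
        (\<lambda>i \<omega>. case i of Inl m \<Rightarrow> Inl (S m \<omega>) | Inr m \<Rightarrow> Inr (C m \<omega>))
        (Inl ` {1..} \<union> range Inr)"
begin

definition Zv :: "nat + nat \<Rightarrow> 'a \<Rightarrow> (nat \<times> nat) set + nat" where
  "Zv = (\<lambda>i \<omega>. case i of Inl m \<Rightarrow> Inl (S m \<omega>) | Inr m \<Rightarrow> Inr (C m \<omega>))"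
definition II :: "(nat + nat) set" where "II = Inl ` {1..} \<union> range Inr"
definition Ev where "Ev i = {Zv i -` A \<inter> space M | A. A \<in> sets (count_space UNIV)}"
definition sig where "sig J = sigma_sets (space M) (\<Union>i\<in>J. Ev i)"
definition dep :: "(nat + nat) set \<Rightarrow> ('a \<Rightarrow> 'b) \<Rightarrow> bool" where
  "dep J f \<longleftrightarrow> (\<forall>B. {\<omega>\<in>space M. f \<omega> \<in> B} \<in> sig J)"

lemma indep_Ev: "indep_sets Ev II"
  using indep unfolding indep_vars_def2 Ev_def Zv_def II_def by simp

lemma Ev_events: "i \<in> II \<Longrightarrow> Ev i \<subseteq> events"
  using indep_Ev unfolding indep_sets_def by auto

lemma Ev_Pow: "Ev i \<subseteq> Pow (space M)" unfolding Ev_def by auto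

lemma sig_events: "J \<subseteq> II \<Longrightarrow> sig J \<subseteq> events"
  unfolding sig_def using Ev_events by (intro sets.sigma_sets_subset) auto

lemma sig_algebra: "sigma_algebra (space M) (sig J)"
  unfolding sig_def using Ev_Pow by (intro sigma_algebra_sigma_sets) auto

lemma Int_stable_Ev: "Int_stable (Ev i)"
  unfolding Int_stable_def Ev_def
proof (intro ballI)
  fix a b assume "a \<in> {Zv i -` A \<inter> space M |A. A \<in> sets (count_space UNIV)}"
     "b \<in> {Zv i -` A \<inter> space M |A. A \<in> sets (count_space UNIV)}"
  then obtain A B where "a = Zv i -` A \<inter> space M" "b = Zv i -` B \<inter> space M" by auto
  then have e: "a \<inter> b = Zv i -` (A \<inter> B) \<inter> space M" by auto
  have "A \<inter> B \<in> sets (count_space UNIV)" by simp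
  with e show "a \<inter> b \<in> {Zv i -` A \<inter> space M |A. A \<in> sets (count_space UNIV)}" by blast
qed

lemma indep_sig: assumes "J1 \<subseteq> II" "J2 \<subseteq> II" "J1 \<inter> J2 = {}"
  shows "indep_set (sig J1) (sig J2)"
proof -
  have "indep_sets Ev (\<Union>b\<in>UNIV. case_bool J1 J2 b)"
    using assms by (intro indep_sets_mono_index[OF _ indep_Ev]) (auto split: bool.split_asm)
  then have "indep_sets (\<lambda>b. sigma_sets (space M) (\<Union>i\<in>case_bool J1 J2 b. Ev i)) UNIV"
    by (rule indep_sets_collect_sigma) (use assms Int_stable_Ev in \<open>auto simp: disjoint_family_on_def split: bool.split\<close>)
  moreover have "(\<lambda>b. sigma_sets (space M) (\<Union>i\<in>case_bool J1 J2 b. Ev i)) = case_bool (sig J1) (sig J2)"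
    by (rule ext) (simp add: sig_def split: bool.split)
  ultimately show ?thesis unfolding indep_set_def by simp
qed

lemma indep_prob: assumes "J1 \<subseteq> II" "J2 \<subseteq> II" "J1 \<inter> J2 = {}" "a \<in> sig J1" "b \<in> sig J2"
  shows "prob (a \<inter> b) = prob a * prob b"
  using indep_setD[OF indep_sig[OF assms(1-3)] assms(4,5)] .

lemma dep_S: assumes "Inl q \<in> J" shows "dep J (S q)"
  unfolding dep_def
proof
  fix B
  have "{\<omega>\<in>space M. S q \<omega> \<in> B} = Zv (Inl q) -` (Inl ` B) \<inter> space M" unfolding Zv_def by auto
  also have "\<dots> \<in> Ev (Inl q)" unfolding Ev_def by auto
  finally show "{\<omega>\<in>space M. S q \<omega> \<in> B} \<in> sig J" unfolding sig_def using assms by blast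
qed

lemma dep_C: assumes "Inr q \<in> J" shows "dep J (C q)"
  unfolding dep_def
proof
  fix B
  have "{\<omega>\<in>space M. C q \<omega> \<in> B} = Zv (Inr q) -` (Inr ` B) \<inter> space M" unfolding Zv_def by auto
  also have "\<dots> \<in> Ev (Inr q)" unfolding Ev_def by auto
  finally show "{\<omega>\<in>space M. C q \<omega> \<in> B} \<in> sig J" unfolding sig_def using assms by blast
qed

lemma dep_comp: "dep J f \<Longrightarrow> dep J (\<lambda>\<omega>. g (f \<omega>))"
  unfolding dep_def
proof
  fix B assume "\<forall>B. {\<omega> \<in> space M. f \<omega> \<in> B} \<in> sig J"
  then have "{\<omega> \<in> space M. f \<omega> \<in> g -` B} \<in> sig J" by blast
  then show "{\<omega> \<in> space M. g (f \<omega>) \<in> B} \<in> sig J" by simp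
qed

lemma dep_cong: assumes "dep J f" "\<And>\<omega>. \<omega> \<in> space M \<Longrightarrow> f \<omega> = g \<omega>" shows "dep J g"
  unfolding dep_def
proof
  fix B
  have "{\<omega> \<in> space M. g \<omega> \<in> B} = {\<omega> \<in> space M. f \<omega> \<in> B}" using assms(2) by auto
  then show "{\<omega> \<in> space M. g \<omega> \<in> B} \<in> sig J" using assms(1) unfolding dep_def by simp
qed

lemma dep_mono: "J \<subseteq> J' \<Longrightarrow> dep J f \<Longrightarrow> dep J' f"
  unfolding dep_def sig_def using sigma_sets_mono'[of "\<Union>i\<in>J. Ev i" "\<Union>i\<in>J'. Ev i" "space M"] by blast

lemma dep_pair: assumes "dep J f" "dep J g" "finite (f ` space M)"
  shows "dep J (\<lambda>\<omega>. (f \<omega>, g \<omega>))"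
  unfolding dep_def
proof
  fix B
  interpret sa: sigma_algebra "space M" "sig J" by (rule sig_algebra)
  have F: "\<And>v. v \<in> f ` space M \<Longrightarrow> {\<omega>\<in>space M. f \<omega> \<in> {v}} \<in> sig J" using assms(1) unfolding dep_def by blast
  have G: "\<And>v. v \<in> f ` space M \<Longrightarrow> {\<omega>\<in>space M. g \<omega> \<in> {y. (v,y)\<in>B}} \<in> sig J" using assms(2) unfolding dep_def by blast
  have "{\<omega> \<in> space M. (f \<omega>, g \<omega>) \<in> B} = (\<Union>v\<in>f ` space M. {\<omega> \<in> space M. f \<omega> \<in> {v}} \<inter> {\<omega> \<in> space M. g \<omega> \<in> {y. (v,y) \<in> B}})"
    by auto
  also have "\<dots> \<in> sig J"
    by (intro sa.finite_UN sa.Int F G assms(3))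
  finally show "{\<omega> \<in> space M. (f \<omega>, g \<omega>) \<in> B} \<in> sig J" .
qed

lemma dep_event: "dep J f \<Longrightarrow> J \<subseteq> II \<Longrightarrow> {\<omega>\<in>space M. f \<omega> \<in> B} \<in> events"
  using sig_events unfolding dep_def by blast

lemma dist: assumes "finite V" "\<And>\<omega>. \<omega> \<in> space M \<Longrightarrow> W \<omega> \<in> V"
  "\<And>v. v \<in> V \<Longrightarrow> {\<omega>\<in>space M. W \<omega> = v} \<in> events"
  shows "prob {\<omega>\<in>space M. P (W \<omega>)} = (\<Sum>v\<in>{v\<in>V. P v}. prob {\<omega>\<in>space M. W \<omega> = v})"
proof -
  have "{\<omega>\<in>space M. P (W \<omega>)} = (\<Union>v\<in>{v\<in>V. P v}. {\<omega>\<in>space M. W \<omega> = v})" using assms(2) by auto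
  then have "prob {\<omega>\<in>space M. P (W \<omega>)} = prob (\<Union>v\<in>{v\<in>V. P v}. {\<omega>\<in>space M. W \<omega> = v})" by simp
  also have "\<dots> = (\<Sum>v\<in>{v\<in>V. P v}. prob {\<omega>\<in>space M. W \<omega> = v})"
    by (rule finite_measure_finite_Union) (use assms in \<open>auto simp: disjoint_family_on_def\<close>)
  finally show ?thesis .
qed

lemma S_finite: "1 \<le> q \<Longrightarrow> finite (S q ` space M)"
proof (rule finite_subset[of _ "rha_subsets k q"])
  assume "1 \<le> q" then show "S q ` space M \<subseteq> rha_subsets k q" using S_range by auto
  show "finite (rha_subsets k q)"
    by (rule finite_subset[of _ "Pow ({1..k (q - 1)} \<times> {1..k (q - 1)})"]) (auto simp: rha_subsets_def)
qed

end


context rha begin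

definition H1 :: "(nat + nat) set \<Rightarrow> nat \<Rightarrow> ('a \<Rightarrow> nat) \<Rightarrow> bool" where
  "H1 J q A \<longleftrightarrow> dep J A \<and> (\<forall>\<omega>\<in>space M. A \<omega> \<in> {1..k q}) \<and>
     (\<forall>x\<in>{1..k q}. prob {\<omega>\<in>space M. A \<omega> = x} = 1 / real (k q))"

definition H2 :: "(nat + nat) set \<Rightarrow> nat \<Rightarrow> ('a \<Rightarrow> nat) \<Rightarrow> ('a \<Rightarrow> nat) \<Rightarrow> bool" where
  "H2 J q A B \<longleftrightarrow> dep J (\<lambda>\<omega>. (A \<omega>, B \<omega>)) \<and> (\<forall>\<omega>\<in>space M. A \<omega> \<in> {1..k q} \<and> B \<omega> \<in> {1..k q}) \<and>
     (\<forall>x\<in>{1..k q}. \<forall>y\<in>{1..k q}. prob {\<omega>\<in>space M. A \<omega> = x \<and> B \<omega> = y} = 1 / (real (k q))^2)"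

lemma H2_marg: assumes J: "J \<subseteq> II" and H: "H2 J q A B" shows "H1 J q A" "H1 J q B"
proof -
  let ?W = "\<lambda>\<omega>. (A \<omega>, B \<omega>)" let ?V = "{1..k q} \<times> {1..k q}"
  have dW: "dep J ?W" and rg: "\<And>\<omega>. \<omega> \<in> space M \<Longrightarrow> ?W \<omega> \<in> ?V"
    and pr: "\<And>x y. x \<in> {1..k q} \<Longrightarrow> y \<in> {1..k q} \<Longrightarrow> prob {\<omega>\<in>space M. A \<omega> = x \<and> B \<omega> = y} = 1 / (real (k q))^2"
    using H unfolding H2_def by auto
  have ev: "\<And>v. v \<in> ?V \<Longrightarrow> {\<omega>\<in>space M. ?W \<omega> = v} \<in> events"
    using dep_event[OF dW J, of "{v}" for v] by simp
  have pv: "prob {\<omega>\<in>space M. ?W \<omega> = v} = 1 / (real (k q))^2" if "v \<in> ?V" for v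
    using pr[of "fst v" "snd v"] that by (cases v) auto
  have kp: "real (k q) > 0" using kpos[of q] by simp
  have c1: "card {v \<in> ?V. fst v = x} = k q" if "x \<in> {1..k q}" for x
  proof -
    have "{v \<in> ?V. fst v = x} = {x} \<times> {1..k q}" using that by auto
    then show ?thesis by (simp add: card_cartesian_product)
  qed
  have c2: "card {v \<in> ?V. snd v = x} = k q" if "x \<in> {1..k q}" for x
  proof -
    have "{v \<in> ?V. snd v = x} = {1..k q} \<times> {x}" using that by auto
    then show ?thesis by (simp add: card_cartesian_product)
  qed
  have "prob {\<omega>\<in>space M. A \<omega> = x} = 1 / real (k q)" if x: "x \<in> {1..k q}" for x
  proof -
    have "prob {\<omega>\<in>space M. A \<omega> = x} = prob {\<omega>\<in>space M. fst (?W \<omega>) = x}" by simp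
    also have "\<dots> = (\<Sum>v\<in>{v\<in>?V. fst v = x}. prob {\<omega>\<in>space M. ?W \<omega> = v})"
      by (rule dist) (use rg ev in auto)
    also have "\<dots> = (\<Sum>v\<in>{v\<in>?V. fst v = x}. 1 / (real (k q))^2)"
      by (rule sum.cong) (use pv in auto)
    also have "\<dots> = 1 / real (k q)" using c1[OF x] kp by (simp add: power2_eq_square)
    finally show ?thesis .
  qed
  moreover have "dep J A" using dep_comp[OF dW, of fst] by simp
  ultimately show "H1 J q A" unfolding H1_def using rg by auto
  have "prob {\<omega>\<in>space M. B \<omega> = x} = 1 / real (k q)" if x: "x \<in> {1..k q}" for x
  proof -
    have "prob {\<omega>\<in>space M. B \<omega> = x} = prob {\<omega>\<in>space M. snd (?W \<omega>) = x}" by simp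
    also have "\<dots> = (\<Sum>v\<in>{v\<in>?V. snd v = x}. prob {\<omega>\<in>space M. ?W \<omega> = v})"
      by (rule dist) (use rg ev in auto)
    also have "\<dots> = (\<Sum>v\<in>{v\<in>?V. snd v = x}. 1 / (real (k q))^2)"
      by (rule sum.cong) (use pv in auto)
    also have "\<dots> = 1 / real (k q)" using c2[OF x] kp by (simp add: power2_eq_square)
    finally show ?thesis .
  qed
  moreover have "dep J B" using dep_comp[OF dW, of snd] by simp
  ultimately show "H1 J q B" unfolding H1_def using rg by auto
qed

lemma H_comb: assumes "J1 \<subseteq> II" "J2 \<subseteq> II" "J1 \<inter> J2 = {}" "H1 J1 q A" "H1 J2 q B"
  shows "H2 (J1 \<union> J2) q A B"
proof -
  have dA: "dep J1 A" and dB: "dep J2 B" and rA: "\<And>\<omega>. \<omega> \<in> space M \<Longrightarrow> A \<omega> \<in> {1..k q}"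
    and rB: "\<And>\<omega>. \<omega> \<in> space M \<Longrightarrow> B \<omega> \<in> {1..k q}"
    and pA: "\<And>x. x \<in> {1..k q} \<Longrightarrow> prob {\<omega>\<in>space M. A \<omega> = x} = 1 / real (k q)"
    and pB: "\<And>x. x \<in> {1..k q} \<Longrightarrow> prob {\<omega>\<in>space M. B \<omega> = x} = 1 / real (k q)"
    using assms(4,5) unfolding H1_def by auto
  have fin: "finite (A ` space M)" by (rule finite_subset[of _ "{1..k q}"]) (use rA in auto)
  have d: "dep (J1 \<union> J2) (\<lambda>\<omega>. (A \<omega>, B \<omega>))"
    by (rule dep_pair[OF dep_mono[OF _ dA] dep_mono[OF _ dB] fin]) auto
  have "prob {\<omega>\<in>space M. A \<omega> = x \<and> B \<omega> = y} = 1 / (real (k q))^2"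
    if "x \<in> {1..k q}" "y \<in> {1..k q}" for x y
  proof -
    have e: "{\<omega>\<in>space M. A \<omega> = x \<and> B \<omega> = y} = {\<omega>\<in>space M. A \<omega> \<in> {x}} \<inter> {\<omega>\<in>space M. B \<omega> \<in> {y}}" by auto
    have "prob {\<omega>\<in>space M. A \<omega> = x \<and> B \<omega> = y} = prob {\<omega>\<in>space M. A \<omega> \<in> {x}} * prob {\<omega>\<in>space M. B \<omega> \<in> {y}}"
      unfolding e using dA dB unfolding dep_def by (intro indep_prob[OF assms(1-3)]) blast+
    then show ?thesis using pA[OF that(1)] pB[OF that(2)] by (simp add: power2_eq_square)
  qed
  then show ?thesis unfolding H2_def using d rA rB by auto
qed

lemma H1_mono: "J \<subseteq> J' \<Longrightarrow> H1 J q A \<Longrightarrow> H1 J' q A"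
  unfolding H1_def using dep_mono by blast
lemma H2_mono: "J \<subseteq> J' \<Longrightarrow> H2 J q A B \<Longrightarrow> H2 J' q A B"
  unfolding H2_def using dep_mono by blast

lemma H2_cong: assumes "H2 J q A B" "\<And>\<omega>. \<omega> \<in> space M \<Longrightarrow> A \<omega> = A' \<omega>" "\<And>\<omega>. \<omega> \<in> space M \<Longrightarrow> B \<omega> = B' \<omega>"
  shows "H2 J q A' B'"
proof -
  have "{\<omega>\<in>space M. A' \<omega> = x \<and> B' \<omega> = y} = {\<omega>\<in>space M. A \<omega> = x \<and> B \<omega> = y}" for x y
    using assms(2,3) by auto
  moreover have "dep J (\<lambda>\<omega>. (A' \<omega>, B' \<omega>))" using assms unfolding H2_def by (auto intro: dep_cong)
  ultimately show ?thesis using assms unfolding H2_def by auto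
qed

lemma H1_base: "H1 {Inr q} q (C q)"
  unfolding H1_def using dep_C[of q "{Inr q}"] C_range C_unif by auto

lemma subsets_eq: "rha_subsets k q = {T. T \<subseteq> {1..k (q-1)} \<times> {1..k (q-1)} \<and> card T = k q}"
  unfolding rha_subsets_def by simp

lemma C_pos: assumes "1 \<le> q" shows "((k (q-1)) * k (q-1) choose k q) > 0"
  using kmono[OF assms] by (simp add: power2_eq_square)

end


lemma real_frac1: fixes c N Cn kk N0 :: nat
  assumes "c * N = Cn * kk" "N = N0*N0" "Cn > 0" "kk > 0"
  shows "real c * (1 / real Cn * (1 / real kk)) = 1 / (real N0)^2"
proof -
  have "N0 > 0" using assms by (cases "N0 = 0") auto
  have "real c * (real N0 * real N0) = real Cn * real kk" using assms(1,2) by (metis of_nat_mult)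
  then show ?thesis using assms(3,4) \<open>N0 > 0\<close> by (simp add: field_simps power2_eq_square)
qed

lemma real_frac2: fixes c N Cn kk N0 :: nat
  assumes "c * N = Cn * kk^2" "N = N0*N0" "Cn > 0" "kk > 0"
  shows "real c * (1 / real Cn * (1 / (real kk)^2)) = 1 / (real N0)^2"
proof -
  have "N0 > 0" using assms by (cases "N0 = 0") auto
  have "real c * (real N0 * real N0) = real Cn * (real kk * real kk)" using assms(1,2)
    by (metis of_nat_mult power2_eq_square)
  then show ?thesis using assms(3,4) \<open>N0 > 0\<close> by (simp add: field_simps power2_eq_square)
qed

context rha begin

lemma Tset_finite: "finite (rha_subsets k q)"
  by (rule finite_subset[of _ "Pow ({1..k (q - 1)} \<times> {1..k (q - 1)})"]) (auto simp: rha_subsets_def)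

lemma prob_S_A: assumes q1: "1 \<le> q" and J: "J \<subseteq> II" "Inl q \<notin> J" and dA: "dep J A"
  and T: "T \<in> rha_subsets k q"
  shows "prob {\<omega>\<in>space M. (S q \<omega>, A \<omega>) = (T, a)} =
     1 / real ((k (q-1)) * k (q-1) choose k q) * prob {\<omega>\<in>space M. A \<omega> = a}"
proof -
  have e: "{\<omega>\<in>space M. (S q \<omega>, A \<omega>) = (T, a)} = {\<omega>\<in>space M. S q \<omega> \<in> {T}} \<inter> {\<omega>\<in>space M. A \<omega> \<in> {a}}" by auto
  have I: "{Inl q} \<subseteq> II" using q1 unfolding II_def by auto
  have "prob {\<omega>\<in>space M. (S q \<omega>, A \<omega>) = (T, a)} = prob {\<omega>\<in>space M. S q \<omega> \<in> {T}} * prob {\<omega>\<in>space M. A \<omega> \<in> {a}}"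
    unfolding e using dep_S[of q "{Inl q}"] dA J unfolding dep_def
    by (intro indep_prob[OF I J(1)]) blast+
  moreover have "prob {\<omega>\<in>space M. S q \<omega> \<in> {T}} = 1 / real ((k (q-1)) * k (q-1) choose k q)"
    using S_unif[OF q1 T] by (simp add: power2_eq_square)
  ultimately show ?thesis by simp
qed

lemma H_split: assumes q1: "1 \<le> q" and J: "J \<subseteq> II" "Inl q \<notin> J" and H: "H1 J q A"
  shows "H2 (insert (Inl q) J) (q-1) (\<lambda>\<omega>. rha_L (\<lambda>m. S m \<omega>) q (A \<omega>)) (\<lambda>\<omega>. rha_R (\<lambda>m. S m \<omega>) q (A \<omega>))"
proof -
  define N0 where "N0 = k (q-1)"
  define kk where "kk = k q"
  define Tset where "Tset = rha_subsets k q"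
  have Tset_eq: "Tset = {T. T \<subseteq> {1..N0}\<times>{1..N0} \<and> card T = kk}" using subsets_eq unfolding Tset_def N0_def kk_def by simp
  have dA: "dep J A" and rA: "\<And>\<omega>. \<omega> \<in> space M \<Longrightarrow> A \<omega> \<in> {1..kk}"
    and pA: "\<And>x. x \<in> {1..kk} \<Longrightarrow> prob {\<omega>\<in>space M. A \<omega> = x} = 1 / real kk"
    using H unfolding H1_def kk_def by auto
  let ?W = "\<lambda>\<omega>. (S q \<omega>, A \<omega>)" let ?V = "Tset \<times> {1..kk}"
  have J': "insert (Inl q) J \<subseteq> II" using q1 J unfolding II_def by auto
  have dW: "dep (insert (Inl q) J) ?W"
    by (rule dep_pair[OF dep_S[of q] dep_mono[OF _ dA] S_finite[OF q1]]) auto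
  have rg: "\<And>\<omega>. \<omega> \<in> space M \<Longrightarrow> ?W \<omega> \<in> ?V" using S_range[OF q1] rA unfolding Tset_def by auto
  have fV: "finite ?V" using Tset_finite unfolding Tset_def by simp
  have ev: "\<And>v. v \<in> ?V \<Longrightarrow> {\<omega>\<in>space M. ?W \<omega> = v} \<in> events"
    using dep_event[OF dW J', of "{v}" for v] by simp
  have Cpos: "(N0*N0 choose kk) > 0" using C_pos[OF q1] unfolding N0_def kk_def .
  have kkpos: "kk > 0" using kpos[of q] unfolding kk_def by simp
  have pv: "prob {\<omega>\<in>space M. ?W \<omega> = v} = 1 / real (N0*N0 choose kk) * (1 / real kk)" if vV: "v \<in> ?V" for v
  proof -
    obtain T a where v: "v = (T, a)" "T \<in> Tset" "a \<in> {1..kk}" using vV by (cases v) auto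
    show ?thesis unfolding v(1) using prob_S_A[OF q1 J dA, of T a] v pA unfolding Tset_def N0_def kk_def by simp
  qed
  have dO: "dep (insert (Inl q) J) (\<lambda>\<omega>. (rha_L (\<lambda>m. S m \<omega>) q (A \<omega>), rha_R (\<lambda>m. S m \<omega>) q (A \<omega>)))"
    using dep_comp[OF dW, of "\<lambda>(T,a). (fst (rha_pair T a), snd (rha_pair T a))"]
    by (simp add: rha_L_def rha_R_def)
  have rO: "\<forall>\<omega>\<in>space M. rha_L (\<lambda>m. S m \<omega>) q (A \<omega>) \<in> {1..k (q-1)} \<and> rha_R (\<lambda>m. S m \<omega>) q (A \<omega>) \<in> {1..k (q-1)}"
    using pair_range[OF S_range[OF q1] rA[unfolded kk_def]] by (simp add: rha_L_def rha_R_def)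
  have "prob {\<omega>\<in>space M. rha_L (\<lambda>m. S m \<omega>) q (A \<omega>) = x \<and> rha_R (\<lambda>m. S m \<omega>) q (A \<omega>) = y} = 1 / (real (k (q-1)))^2"
    if xy: "x \<in> {1..k (q-1)}" "y \<in> {1..k (q-1)}" for x y
  proof -
    let ?P = "\<lambda>(T,a). rha_pair T a = (x,y)"
    have "{\<omega>\<in>space M. rha_L (\<lambda>m. S m \<omega>) q (A \<omega>) = x \<and> rha_R (\<lambda>m. S m \<omega>) q (A \<omega>) = y} = {\<omega>\<in>space M. ?P (?W \<omega>)}"
      by (auto simp: rha_L_def rha_R_def prod_eq_iff)
    then have "prob {\<omega>\<in>space M. rha_L (\<lambda>m. S m \<omega>) q (A \<omega>) = x \<and> rha_R (\<lambda>m. S m \<omega>) q (A \<omega>) = y}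
       = (\<Sum>v\<in>{v\<in>?V. ?P v}. prob {\<omega>\<in>space M. ?W \<omega> = v})"
      using dist[OF fV rg ev, of ?P] by simp
    also have "\<dots> = (\<Sum>v\<in>{v\<in>?V. ?P v}. 1 / real (N0*N0 choose kk) * (1 / real kk))"
      by (rule sum.cong) (use pv in auto)
    also have "\<dots> = real (card {v\<in>?V. ?P v}) * (1 / real (N0*N0 choose kk) * (1 / real kk))" by simp
    also have "{v\<in>?V. ?P v} = (SIGMA T:Tset. {a\<in>{1..kk}. rha_pair T a = (x,y)})" by auto
    also have "real (card (SIGMA T:Tset. {a\<in>{1..kk}. rha_pair T a = (x,y)})) * (1 / real (N0*N0 choose kk) * (1 / real kk))
        = 1 / (real N0)^2"
    proof (rule real_frac1[OF _ refl Cpos kkpos])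
      show "card (SIGMA T:Tset. {a\<in>{1..kk}. rha_pair T a = (x,y)}) * (N0*N0) = (N0*N0 choose kk) * kk"
        unfolding Tset_eq using count_split[where ?N0.0=N0 and kk=kk and x=x and y=y] kkpos xy unfolding N0_def by simp
    qed
    finally show ?thesis unfolding N0_def .
  qed
  then show ?thesis unfolding H2_def using dO rO by auto
qed

lemma H_mixed: assumes q1: "1 \<le> q" and J: "J \<subseteq> II" "Inl q \<notin> J" and H: "H2 J q A B"
  shows "H2 (insert (Inl q) J) (q-1) (\<lambda>\<omega>. rha_R (\<lambda>m. S m \<omega>) q (A \<omega>)) (\<lambda>\<omega>. rha_L (\<lambda>m. S m \<omega>) q (B \<omega>))"
proof -
  define N0 where "N0 = k (q-1)"
  define kk where "kk = k q"
  define Tset where "Tset = rha_subsets k q"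
  have Tset_eq: "Tset = {T. T \<subseteq> {1..N0}\<times>{1..N0} \<and> card T = kk}" using subsets_eq unfolding Tset_def N0_def kk_def by simp
  let ?AB = "\<lambda>\<omega>. (A \<omega>, B \<omega>)"
  have dA: "dep J ?AB" and rA: "\<And>\<omega>. \<omega> \<in> space M \<Longrightarrow> ?AB \<omega> \<in> {1..kk} \<times> {1..kk}"
    and pA: "\<And>x y. x \<in> {1..kk} \<Longrightarrow> y \<in> {1..kk} \<Longrightarrow> prob {\<omega>\<in>space M. A \<omega> = x \<and> B \<omega> = y} = 1 / (real kk)^2"
    using H unfolding H2_def kk_def by auto
  let ?W = "\<lambda>\<omega>. (S q \<omega>, ?AB \<omega>)" let ?V = "Tset \<times> ({1..kk} \<times> {1..kk})"
  have J': "insert (Inl q) J \<subseteq> II" using q1 J unfolding II_def by auto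
  have dW: "dep (insert (Inl q) J) ?W"
    by (rule dep_pair[OF dep_S[of q] dep_mono[OF _ dA] S_finite[OF q1]]) auto
  have rg: "\<And>\<omega>. \<omega> \<in> space M \<Longrightarrow> ?W \<omega> \<in> ?V" using S_range[OF q1] rA unfolding Tset_def by auto
  have fV: "finite ?V" using Tset_finite unfolding Tset_def by simp
  have ev: "\<And>v. v \<in> ?V \<Longrightarrow> {\<omega>\<in>space M. ?W \<omega> = v} \<in> events"
    using dep_event[OF dW J', of "{v}" for v] by simp
  have Cpos: "(N0*N0 choose kk) > 0" using C_pos[OF q1] unfolding N0_def kk_def .
  have kkpos: "kk > 0" using kpos[of q] unfolding kk_def by simp
  have pv: "prob {\<omega>\<in>space M. ?W \<omega> = v} = 1 / real (N0*N0 choose kk) * (1 / (real kk)^2)" if vV: "v \<in> ?V" for v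
  proof -
    obtain T a b where v: "v = (T, (a, b))" "T \<in> Tset" "a \<in> {1..kk}" "b \<in> {1..kk}" using vV by (cases v) auto
    have "prob {\<omega>\<in>space M. ?AB \<omega> = (a, b)} = 1 / (real kk)^2" using pA[OF v(3,4)] by simp
    then show ?thesis unfolding v(1) using prob_S_A[OF q1 J dA, of T "(a,b)"] v unfolding Tset_def N0_def kk_def by simp
  qed
  have dO: "dep (insert (Inl q) J) (\<lambda>\<omega>. (rha_R (\<lambda>m. S m \<omega>) q (A \<omega>), rha_L (\<lambda>m. S m \<omega>) q (B \<omega>)))"
    using dep_comp[OF dW, of "\<lambda>(T,a,b). (snd (rha_pair T a), fst (rha_pair T b))"]
    by (simp add: rha_L_def rha_R_def)
  have rO: "\<forall>\<omega>\<in>space M. rha_R (\<lambda>m. S m \<omega>) q (A \<omega>) \<in> {1..k (q-1)} \<and> rha_L (\<lambda>m. S m \<omega>) q (B \<omega>) \<in> {1..k (q-1)}"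
  proof
    fix \<omega> assume \<omega>: "\<omega> \<in> space M"
    then have "A \<omega> \<in> {1..k q}" "B \<omega> \<in> {1..k q}" using rA[OF \<omega>] unfolding kk_def by auto
    then show "rha_R (\<lambda>m. S m \<omega>) q (A \<omega>) \<in> {1..k (q-1)} \<and> rha_L (\<lambda>m. S m \<omega>) q (B \<omega>) \<in> {1..k (q-1)}"
      using pair_range[OF S_range[OF q1 \<omega>]] by (simp add: rha_L_def rha_R_def)
  qed
  have "prob {\<omega>\<in>space M. rha_R (\<lambda>m. S m \<omega>) q (A \<omega>) = x \<and> rha_L (\<lambda>m. S m \<omega>) q (B \<omega>) = y} = 1 / (real (k (q-1)))^2"
    if xy: "x \<in> {1..k (q-1)}" "y \<in> {1..k (q-1)}" for x y
  proof -
    let ?P = "\<lambda>(T,a,b). snd (rha_pair T a) = x \<and> fst (rha_pair T b) = y"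
    have "{\<omega>\<in>space M. rha_R (\<lambda>m. S m \<omega>) q (A \<omega>) = x \<and> rha_L (\<lambda>m. S m \<omega>) q (B \<omega>) = y} = {\<omega>\<in>space M. ?P (?W \<omega>)}"
      by (auto simp: rha_L_def rha_R_def)
    then have "prob {\<omega>\<in>space M. rha_R (\<lambda>m. S m \<omega>) q (A \<omega>) = x \<and> rha_L (\<lambda>m. S m \<omega>) q (B \<omega>) = y}
       = (\<Sum>v\<in>{v\<in>?V. ?P v}. prob {\<omega>\<in>space M. ?W \<omega> = v})"
      using dist[OF fV rg ev, of ?P] by simp
    also have "\<dots> = (\<Sum>v\<in>{v\<in>?V. ?P v}. 1 / real (N0*N0 choose kk) * (1 / (real kk)^2))"
      by (rule sum.cong) (use pv in auto)
    also have "\<dots> = real (card {v\<in>?V. ?P v}) * (1 / real (N0*N0 choose kk) * (1 / (real kk)^2))" by simp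
    also have "{v\<in>?V. ?P v} = (SIGMA T:Tset. {(a,b)\<in>{1..kk}\<times>{1..kk}. snd (rha_pair T a) = x \<and> fst (rha_pair T b) = y})" by auto
    also have "real (card (SIGMA T:Tset. {(a,b)\<in>{1..kk}\<times>{1..kk}. snd (rha_pair T a) = x \<and> fst (rha_pair T b) = y})) * (1 / real (N0*N0 choose kk) * (1 / (real kk)^2))
        = 1 / (real N0)^2"
    proof (rule real_frac2[OF _ refl Cpos kkpos])
      show "card (SIGMA T:Tset. {(a,b)\<in>{1..kk}\<times>{1..kk}. snd (rha_pair T a) = x \<and> fst (rha_pair T b) = y}) * (N0*N0) = (N0*N0 choose kk) * kk^2"
        unfolding Tset_eq using count_mixed[where ?N0.0=N0 and kk=kk and x=x and y=y] kkpos xy unfolding N0_def by simp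
    qed
    finally show ?thesis unfolding N0_def .
  qed
  then show ?thesis unfolding H2_def using dO rO by auto
qed

end


lemma down_left: "n \<le> q \<Longrightarrow> t < 2^(q-n) \<Longrightarrow> down S n (Suc q) t a = down S n q t (rha_L S (Suc q) a)"
  by simp
lemma down_right: "n \<le> q \<Longrightarrow> \<not> t < 2^(q-n) \<Longrightarrow> down S n (Suc q) t a = down S n q (t - 2^(q-n)) (rha_R S (Suc q) a)"
  by simp

context rha begin

lemma H2_prob: "H2 J q A B \<Longrightarrow> x \<in> {1..k q} \<Longrightarrow> y \<in> {1..k q} \<Longrightarrow>
   prob {\<omega>\<in>space M. A \<omega> = x \<and> B \<omega> = y} = 1 / (real (k q))^2"
  unfolding H2_def by auto

lemma last_first: "n \<le> q \<Longrightarrow> J \<subseteq> Inl ` {Suc q..} \<union> range Inr \<Longrightarrow> H2 J q A B \<Longrightarrow>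
  \<exists>J'. J' \<subseteq> II \<and> H2 J' n (\<lambda>\<omega>. down (\<lambda>m. S m \<omega>) n q (2^(q-n) - 1) (A \<omega>)) (\<lambda>\<omega>. down (\<lambda>m. S m \<omega>) n q 0 (B \<omega>))"
proof (induction q arbitrary: J A B)
  case 0
  then have "J \<subseteq> II" unfolding II_def by auto
  then show ?case using 0 by (intro exI[of _ J]) simp
next
  case (Suc q)
  show ?case
  proof (cases "Suc q \<le> n")
    case True
    then have "J \<subseteq> II" using Suc.prems unfolding II_def by auto
    then show ?thesis using Suc.prems True by (intro exI[of _ J]) (simp add: down_le)
  next
    case False
    then have nq: "n \<le> q" by simp
    have J: "J \<subseteq> II" "Inl (Suc q) \<notin> J" using Suc.prems(2) unfolding II_def by auto
    have H': "H2 (insert (Inl (Suc q)) J) q (\<lambda>\<omega>. rha_R (\<lambda>m. S m \<omega>) (Suc q) (A \<omega>)) (\<lambda>\<omega>. rha_L (\<lambda>m. S m \<omega>) (Suc q) (B \<omega>))"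
      using H_mixed[of "Suc q" J A B] J Suc.prems(3) by simp
    have "insert (Inl (Suc q)) J \<subseteq> Inl ` {Suc q..} \<union> range Inr" using Suc.prems(2) by auto
    from Suc.IH[OF nq this H'] obtain J' where J': "J' \<subseteq> II"
      "H2 J' n (\<lambda>\<omega>. down (\<lambda>m. S m \<omega>) n q (2^(q-n) - 1) (rha_R (\<lambda>m. S m \<omega>) (Suc q) (A \<omega>)))
                (\<lambda>\<omega>. down (\<lambda>m. S m \<omega>) n q 0 (rha_L (\<lambda>m. S m \<omega>) (Suc q) (B \<omega>)))" by blast
    have p: "(2::nat)^(Suc q - n) = 2 * 2^(q-n)" using nq by (simp add: Suc_diff_le)
    have e1: "down S' n (Suc q) (2^(Suc q-n) - 1) a = down S' n q (2^(q-n) - 1) (rha_R S' (Suc q) a)" for S' a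
    proof -
      have "\<not> 2^(Suc q-n) - 1 < (2::nat)^(q-n)" using p by simp
      moreover have "2^(Suc q-n) - 1 - 2^(q-n) = (2::nat)^(q-n) - 1" using p by simp
      ultimately show ?thesis using down_right[OF nq, of "2^(Suc q-n) - 1" S' a] by simp
    qed
    have e2: "down S' n (Suc q) 0 a = down S' n q 0 (rha_L S' (Suc q) a)" for S' a
      using down_left[OF nq, of 0 S' a] by simp
    show ?thesis using J' unfolding e1 e2 by blast
  qed
qed

lemma same_block: "n \<le> q \<Longrightarrow> J \<subseteq> Inl ` {Suc q..} \<union> range Inr \<Longrightarrow> H1 J q A \<Longrightarrow> Suc t < 2^(q-n) \<Longrightarrow>
  \<exists>J'. J' \<subseteq> II \<and> H2 J' n (\<lambda>\<omega>. down (\<lambda>m. S m \<omega>) n q t (A \<omega>)) (\<lambda>\<omega>. down (\<lambda>m. S m \<omega>) n q (Suc t) (A \<omega>))"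
proof (induction q arbitrary: J A t)
  case 0 then show ?case by simp
next
  case (Suc q)
  show ?case
  proof (cases "Suc q \<le> n")
    case True
    then show ?thesis using Suc.prems by simp
  next
    case False
    then have nq: "n \<le> q" by simp
    define e where "e = q - n"
    have p: "(2::nat)^(Suc q - n) = 2 * 2^e" using nq by (simp add: Suc_diff_le e_def)
    have J: "J \<subseteq> II" "Inl (Suc q) \<notin> J" using Suc.prems(2) unfolding II_def by auto
    have J'': "insert (Inl (Suc q)) J \<subseteq> Inl ` {Suc q..} \<union> range Inr" using Suc.prems(2) by auto
    have J''': "insert (Inl (Suc q)) J \<subseteq> II" using J unfolding II_def by auto
    let ?L = "\<lambda>\<omega>. rha_L (\<lambda>m. S m \<omega>) (Suc q) (A \<omega>)" let ?R = "\<lambda>\<omega>. rha_R (\<lambda>m. S m \<omega>) (Suc q) (A \<omega>)"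
    have HS: "H2 (insert (Inl (Suc q)) J) q ?L ?R"
      using H_split[of "Suc q" J A] J Suc.prems(3) by simp
    note HM = H2_marg[OF J''' HS]
    show ?thesis
    proof (cases "Suc t < 2^e")
      case True
      have e1: "down S' n (Suc q) t a = down S' n q t (rha_L S' (Suc q) a)" for S' a
        using down_left[OF nq, of t S' a] True e_def by simp
      have e2: "down S' n (Suc q) (Suc t) a = down S' n q (Suc t) (rha_L S' (Suc q) a)" for S' a
        using down_left[OF nq, of "Suc t" S' a] True e_def by simp
      show ?thesis unfolding e1 e2 using Suc.IH[OF nq J'' HM(1)] True e_def by simp
    next
      case f1: False
      show ?thesis
      proof (cases "t < 2^e")
        case False
        have e1: "down S' n (Suc q) t a = down S' n q (t - 2^e) (rha_R S' (Suc q) a)" for S' a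
          using down_right[OF nq, of t S' a] False e_def by simp
        have e2: "down S' n (Suc q) (Suc t) a = down S' n q (Suc (t - 2^e)) (rha_R S' (Suc q) a)" for S' a
          using down_right[OF nq, of "Suc t" S' a] False e_def by (simp add: Suc_diff_le)
        have "Suc (t - 2^e) < 2^(q-n)" using Suc.prems(4) p False e_def by simp
        then show ?thesis unfolding e1 e2 using Suc.IH[OF nq J'' HM(2)] by simp
      next
        case True
        then have t: "t = 2^e - 1" "Suc t = 2^e" using f1 by auto
        have e1: "down S' n (Suc q) t a = down S' n q (2^(q-n) - 1) (rha_L S' (Suc q) a)" for S' a
          using down_left[OF nq, of t S' a] True t e_def by simp
        have e2: "down S' n (Suc q) (Suc t) a = down S' n q 0 (rha_R S' (Suc q) a)" for S' a
          using down_right[OF nq, of "Suc t" S' a] t e_def by simp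
        show ?thesis unfolding e1 e2 using last_first[OF nq J'' HS] .
      qed
    qed
  qed
qed

end


context rha begin

lemma good_S: "\<omega> \<in> space M \<Longrightarrow> good k (\<lambda>i. S i \<omega>)"
  unfolding good_def using S_range by auto

lemma K_down: assumes "\<omega> \<in> space M" "1 \<le> j"
  shows "rha_K k (\<lambda>i. S i \<omega>) (\<lambda>i. C i \<omega>) n j =
    down (\<lambda>m. S m \<omega>) n (rha_blk (j*2^n)) (j - 2^(rha_blk (j*2^n)-n)) (C (rha_blk (j*2^n)) \<omega>)"
  using K_eq[OF good_S[OF assms(1)], of "\<lambda>i. C i \<omega>", OF _ assms(2)] C_range[OF assms(1)] by simp

lemma main_prob: assumes j: "1 \<le> j" and lm: "l \<in> {1..k n}" "m \<in> {1..k n}"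
  shows "prob {\<omega> \<in> space M. rha_K k (\<lambda>i. S i \<omega>) (\<lambda>i. C i \<omega>) n j = l \<and>
                rha_K k (\<lambda>i. S i \<omega>) (\<lambda>i. C i \<omega>) n (j + 1) = m} = 1 / (real (k n))^2"
proof -
  define mm where "mm = rha_blk (j*2^n)"
  note bb = blk_basic[OF j, of n, folded mm_def]
  define e where "e = mm - n"
  define t where "t = j - 2^e"
  have Kj: "rha_K k (\<lambda>i. S i \<omega>) (\<lambda>i. C i \<omega>) n j = down (\<lambda>m. S m \<omega>) n mm t (C mm \<omega>)" if "\<omega> \<in> space M" for \<omega>
    using K_down[OF that j, where n=n] unfolding mm_def[symmetric] t_def e_def .
  show ?thesis
  proof (cases "Suc j < 2 * 2^e")
    case True
    have b: "rha_blk ((j+1)*2^n) = mm" using blk_next_same[OF j, of n] True unfolding mm_def e_def by simp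
    have tt: "j + 1 - 2^e = Suc t" using bb unfolding t_def e_def by simp
    have Kj1: "rha_K k (\<lambda>i. S i \<omega>) (\<lambda>i. C i \<omega>) n (j+1) = down (\<lambda>m. S m \<omega>) n mm (Suc t) (C mm \<omega>)" if "\<omega> \<in> space M" for \<omega>
      using K_down[OF that, of "j+1" n] b tt unfolding e_def by simp
    have "Suc t < 2^(mm-n)" using True bb unfolding t_def e_def by simp
    then obtain J' where "J' \<subseteq> II" and H: "H2 J' n (\<lambda>\<omega>. down (\<lambda>m. S m \<omega>) n mm t (C mm \<omega>)) (\<lambda>\<omega>. down (\<lambda>m. S m \<omega>) n mm (Suc t) (C mm \<omega>))"
      using same_block[OF bb(1) _ H1_base[of mm]] by auto
    have "{\<omega> \<in> space M. rha_K k (\<lambda>i. S i \<omega>) (\<lambda>i. C i \<omega>) n j = l \<and> rha_K k (\<lambda>i. S i \<omega>) (\<lambda>i. C i \<omega>) n (j + 1) = m}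
      = {\<omega> \<in> space M. down (\<lambda>m. S m \<omega>) n mm t (C mm \<omega>) = l \<and> down (\<lambda>m. S m \<omega>) n mm (Suc t) (C mm \<omega>) = m}"
      using Kj Kj1 by auto
    then show ?thesis using H2_prob[OF H lm] by simp
  next
    case False
    then have jj: "j + 1 = 2 * 2^(rha_blk (j*2^n) - n)" using bb unfolding mm_def e_def by simp
    note nb = blk_next_new[OF j jj]
    have Kj1: "rha_K k (\<lambda>i. S i \<omega>) (\<lambda>i. C i \<omega>) n (j+1) = down (\<lambda>m. S m \<omega>) n mm 0 (rha_L (\<lambda>m. S m \<omega>) (Suc mm) (C (Suc mm) \<omega>))"
      if "\<omega> \<in> space M" for \<omega>
    proof -
      have "rha_K k (\<lambda>i. S i \<omega>) (\<lambda>i. C i \<omega>) n (j+1) = down (\<lambda>m. S m \<omega>) n (Suc mm) 0 (C (Suc mm) \<omega>)"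
        using K_down[OF that, of "j+1" n] nb unfolding mm_def by simp
      also have "\<dots> = down (\<lambda>m. S m \<omega>) n mm 0 (rha_L (\<lambda>m. S m \<omega>) (Suc mm) (C (Suc mm) \<omega>))"
        using down_left[OF bb(1), of 0] by simp
      finally show ?thesis .
    qed
    have tt: "t = 2^(mm-n) - 1" using jj unfolding t_def e_def mm_def by simp
    have HS: "H2 (insert (Inl (Suc mm)) {Inr (Suc mm)}) mm (\<lambda>\<omega>. rha_L (\<lambda>m. S m \<omega>) (Suc mm) (C (Suc mm) \<omega>))
        (\<lambda>\<omega>. rha_R (\<lambda>m. S m \<omega>) (Suc mm) (C (Suc mm) \<omega>))"
      using H_split[of "Suc mm" "{Inr (Suc mm)}" "C (Suc mm)"] H1_base[of "Suc mm"] unfolding II_def by simp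
    have I2: "insert (Inl (Suc mm)) {Inr (Suc mm)} \<subseteq> II" unfolding II_def by auto
    have HL: "H1 (insert (Inl (Suc mm)) {Inr (Suc mm)}) mm (\<lambda>\<omega>. rha_L (\<lambda>m. S m \<omega>) (Suc mm) (C (Suc mm) \<omega>))"
      using H2_marg(1)[OF I2 HS] .
    have HC: "H2 ({Inr mm} \<union> insert (Inl (Suc mm)) {Inr (Suc mm)}) mm (C mm) (\<lambda>\<omega>. rha_L (\<lambda>m. S m \<omega>) (Suc mm) (C (Suc mm) \<omega>))"
      by (rule H_comb[OF _ I2 _ H1_base HL]) (auto simp: II_def)
    have "{Inr mm} \<union> insert (Inl (Suc mm)) {Inr (Suc mm)} \<subseteq> Inl ` {Suc mm..} \<union> range Inr" by auto
    from last_first[OF bb(1) this HC] obtain J' where "J' \<subseteq> II" and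
      H: "H2 J' n (\<lambda>\<omega>. down (\<lambda>m. S m \<omega>) n mm (2^(mm-n) - 1) (C mm \<omega>))
          (\<lambda>\<omega>. down (\<lambda>m. S m \<omega>) n mm 0 (rha_L (\<lambda>m. S m \<omega>) (Suc mm) (C (Suc mm) \<omega>)))" by blast
    have "{\<omega> \<in> space M. rha_K k (\<lambda>i. S i \<omega>) (\<lambda>i. C i \<omega>) n j = l \<and> rha_K k (\<lambda>i. S i \<omega>) (\<lambda>i. C i \<omega>) n (j + 1) = m}
      = {\<omega> \<in> space M. down (\<lambda>m. S m \<omega>) n mm (2^(mm-n) - 1) (C mm \<omega>) = l \<and>
          down (\<lambda>m. S m \<omega>) n mm 0 (rha_L (\<lambda>m. S m \<omega>) (Suc mm) (C (Suc mm) \<omega>)) = m}"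
      using Kj Kj1 tt by auto
    then show ?thesis using H2_prob[OF H lm] by simp
  qed
qed

lemma dep_down: "(\<And>i. n < i \<Longrightarrow> i \<le> q \<Longrightarrow> Inl i \<in> J) \<Longrightarrow> dep J A \<Longrightarrow>
   dep J (\<lambda>\<omega>. down (\<lambda>m. S m \<omega>) n q t (A \<omega>))"
proof (induction q arbitrary: t A)
  case 0 then show ?case by simp
next
  case (Suc q)
  show ?case
  proof (cases "Suc q \<le> n")
    case True then show ?thesis using Suc.prems by (simp add: down_le)
  next
    case False
    have iJ: "Inl (Suc q) \<in> J" using Suc.prems(1) False by simp
    have dL: "dep J (\<lambda>\<omega>. rha_L (\<lambda>m. S m \<omega>) (Suc q) (A \<omega>))"
      using dep_comp[OF dep_pair[OF dep_S[OF iJ] Suc.prems(2) S_finite[of "Suc q"]], of "\<lambda>(T,a). fst (rha_pair T a)"]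
      by (simp add: rha_L_def)
    have dR: "dep J (\<lambda>\<omega>. rha_R (\<lambda>m. S m \<omega>) (Suc q) (A \<omega>))"
      using dep_comp[OF dep_pair[OF dep_S[OF iJ] Suc.prems(2) S_finite[of "Suc q"]], of "\<lambda>(T,a). snd (rha_pair T a)"]
      by (simp add: rha_R_def)
    have P: "\<And>i. n < i \<Longrightarrow> i \<le> q \<Longrightarrow> Inl i \<in> J" using Suc.prems(1) by simp
    show ?thesis
    proof (cases "t < 2^(q-n)")
      case True then show ?thesis using Suc.IH[OF P dL] False by simp
    next
      case f: False then show ?thesis using Suc.IH[OF P dR] False by simp
    qed
  qed
qed

lemma vimage_sub: assumes "\<And>i. i \<in> I \<Longrightarrow> dep J (X i)"
  shows "sets (vimage_algebra (space M) (\<lambda>\<omega>. \<lambda>i\<in>I. X i \<omega>) (Pi\<^sub>M I (\<lambda>_. count_space UNIV))) \<subseteq> sig J"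
proof -
  let ?N = "sigma (space M) (\<Union>i\<in>J. Ev i)"
  have Pw: "(\<Union>i\<in>J. Ev i) \<subseteq> Pow (space M)" using Ev_Pow by auto
  have sN: "space ?N = space M" and eN: "sets ?N = sig J"
    using Pw unfolding sig_def by (simp_all add: space_measure_of sets_measure_of)
  have "X i \<in> measurable ?N (count_space UNIV)" if "i \<in> I" for i
    unfolding measurable_def using assms[OF that] sN eN unfolding dep_def by (auto simp: vimage_def Int_def conj_commute)
  then have "(\<lambda>\<omega>. \<lambda>i\<in>I. X i \<omega>) \<in> measurable ?N (Pi\<^sub>M I (\<lambda>_. count_space UNIV))"
    by (rule measurable_restrict)
  then show ?thesis unfolding measurable_iff_sets sN eN by simp
qed

lemma main_indep:
  "indep_set
     (sets (vimage_algebra (space M)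
        (\<lambda>\<omega>. \<lambda>j\<in>{1..}. rha_K k (\<lambda>m. S m \<omega>) (\<lambda>m. C m \<omega>) n j)
        (Pi\<^sub>M {1..} (\<lambda>_. count_space UNIV))))
     (sets (vimage_algebra (space M)
        (\<lambda>\<omega>. \<lambda>(l, j)\<in>rha_Gidx k n. (rha_L (\<lambda>m. S m \<omega>) l j, rha_R (\<lambda>m. S m \<omega>) l j))
        (Pi\<^sub>M (rha_Gidx k n) (\<lambda>_. count_space UNIV))))"
proof -
  define J1 :: "(nat + nat) set" where "J1 = Inl ` {Suc n..} \<union> range Inr"
  define J2 :: "(nat + nat) set" where "J2 = Inl ` {1..n}"
  have J: "J1 \<subseteq> II" "J2 \<subseteq> II" "J1 \<inter> J2 = {}" unfolding J1_def J2_def II_def by auto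
  have s1: "sets (vimage_algebra (space M)
        (\<lambda>\<omega>. \<lambda>j\<in>{1..}. rha_K k (\<lambda>m. S m \<omega>) (\<lambda>m. C m \<omega>) n j)
        (Pi\<^sub>M {1..} (\<lambda>_. count_space UNIV))) \<subseteq> sig J1"
  proof (rule vimage_sub)
    fix j :: nat assume "j \<in> {1..}"
    then have j: "1 \<le> j" by simp
    define mm where "mm = rha_blk (j*2^n)"
    have "dep J1 (\<lambda>\<omega>. down (\<lambda>m. S m \<omega>) n mm (j - 2^(mm-n)) (C mm \<omega>))"
      by (rule dep_down) (auto simp: J1_def intro: dep_C)
    then show "dep J1 (\<lambda>\<omega>. rha_K k (\<lambda>m. S m \<omega>) (\<lambda>m. C m \<omega>) n j)"
      by (rule dep_cong) (simp add: K_down[OF _ j] mm_def)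
  qed
  have s2: "sets (vimage_algebra (space M)
        (\<lambda>\<omega>. \<lambda>(l, j)\<in>rha_Gidx k n. (rha_L (\<lambda>m. S m \<omega>) l j, rha_R (\<lambda>m. S m \<omega>) l j))
        (Pi\<^sub>M (rha_Gidx k n) (\<lambda>_. count_space UNIV))) \<subseteq> sig J2"
  proof (rule vimage_sub)
    fix i assume "i \<in> rha_Gidx k n"
    then obtain l j where i: "i = (l, j)" "1 \<le> l" "l \<le> n" unfolding rha_Gidx_def by auto
    have "Inl l \<in> J2" using i unfolding J2_def by auto
    from dep_comp[OF dep_S[OF this], of "\<lambda>T. (fst (rha_pair T j), snd (rha_pair T j))"]
    show "dep J2 (\<lambda>\<omega>. case i of (l, j) \<Rightarrow> (rha_L (\<lambda>m. S m \<omega>) l j, rha_R (\<lambda>m. S m \<omega>) l j))"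
      unfolding i(1) by (simp add: rha_L_def rha_R_def)
  qed
  have "indep_set (sig J1) (sig J2)" by (rule indep_sig[OF J])
  then show ?thesis unfolding indep_set_def
    by (rule indep_sets_mono_sets) (use s1 s2 in \<open>auto split: bool.split\<close>)
qed

end

theorem proposition1:
  fixes M :: "'a measure"
    and k :: "nat \<Rightarrow> nat"
    and S :: "nat \<Rightarrow> 'a \<Rightarrow> (nat \<times> nat) set"
    and C :: "nat \<Rightarrow> 'a \<Rightarrow> nat"
    and n :: nat
  assumes P: "prob_space M"
    and kpos: "\<And>i. k i \<ge> 1"
    and kmono: "\<And>i. i \<ge> 1 \<Longrightarrow> k (i - 1) \<le> k i \<and> k i \<le> (k (i - 1))\<^sup>2"
    and S_range: "\<And>i \<omega>. i \<ge> 1 \<Longrightarrow> \<omega> \<in> space M \<Longrightarrow> S i \<omega> \<in> rha_subsets k i"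
    and S_unif: "\<And>i A. i \<ge> 1 \<Longrightarrow> A \<in> rha_subsets k i \<Longrightarrow>
        measure M {\<omega> \<in> space M. S i \<omega> = A} = 1 / real ((k (i - 1))\<^sup>2 choose k i)"
    and C_range: "\<And>i \<omega>. \<omega> \<in> space M \<Longrightarrow> C i \<omega> \<in> {1..k i}"
    and C_unif: "\<And>i l. l \<in> {1..k i} \<Longrightarrow> measure M {\<omega> \<in> space M. C i \<omega> = l} = 1 / real (k i)"
    and indep: "prob_space.indep_vars M (\<lambda>_. count_space UNIV)
        (\<lambda>i \<omega>. case i of Inl m \<Rightarrow> Inl (S m \<omega>) | Inr m \<Rightarrow> Inr (C m \<omega>))
        (Inl ` {1..} \<union> range Inr)"
  shows "prob_space.indep_set M
           (sets (vimage_algebra (space M)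
              (\<lambda>\<omega>. \<lambda>j\<in>{1..}. rha_K k (\<lambda>m. S m \<omega>) (\<lambda>m. C m \<omega>) n j)
              (Pi\<^sub>M {1..} (\<lambda>_. count_space UNIV))))
           (sets (vimage_algebra (space M)
              (\<lambda>\<omega>. \<lambda>(l, j)\<in>rha_Gidx k n. (rha_L (\<lambda>m. S m \<omega>) l j, rha_R (\<lambda>m. S m \<omega>) l j))
              (Pi\<^sub>M (rha_Gidx k n) (\<lambda>_. count_space UNIV))))
       \<and> (\<forall>j\<ge>1. \<forall>l\<in>{1..k n}. \<forall>m\<in>{1..k n}.
            measure M {\<omega> \<in> space M.
                rha_K k (\<lambda>i. S i \<omega>) (\<lambda>i. C i \<omega>) n j = l \<and>
                rha_K k (\<lambda>i. S i \<omega>) (\<lambda>i. C i \<omega>) n (j + 1) = m}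
              = 1 / (real (k n))\<^sup>2)"
proof -
  interpret r: rha M k S C
    using P kpos kmono S_range S_unif C_range C_unif indep by (simp add: rha_def rha_axioms_def)
  show ?thesis using r.main_indep r.main_prob by auto
qed


end
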